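(* Let $G$ be a well-shaped mesh in $d$ dimensions and $G_p\subseteq G$ an induced subgraph. The output $G_{px},G_{py}$ of RelaxBalancedPartition$(G_p)$ is a relax-balanced $f$-partition of $G_p$ with $f(N)=O(N^{1-1/d})$; that is, $|E(G_{px},G_{py})|\le f(|G_p|)$, $|G_{px}|=|G_{py}|\pm O(|G_p|/\log^3|G|)$, and $|\mathrm{outgoing}(G_{px})|=|\mathrm{outgoing}(G_{py})|\pm O(|\mathrm{outgoing}(G_{py})|/\log^2|G|)$.
   Context: A well-shaped mesh in $d$ dimensions ($d>1$ constant) is the graph of a decomposition of a domain in $\mathbb{R}^d$ into interior-disjoint simplices meeting only in lower-dimensional simplices, each with aspect ratio bounded by a fixed constant; it has bounded degree. For a graph $H$, $|H|$ denotes its size (number of vertices plus edges). Asymptotic constants may depend on $d$ and the mesh-quality constants. $\mathrm{outer}(G_p)$ is the set of edges from vertices of $G_p$ to vertices of $G$ outside $G_p$; for a partition of $G_p$ into $G_{px},G_{py}$, $\mathrm{outgoing}(G_{px})=E(G_{px},G-G_p)$ and similarly for $G_{py}$. Geometric separator step: the randomized algorithm of Miller, Teng, Thurston and Vavasis, applied to an induced subgraph $H$ with vertex set $V_H$, repeatedly draws a random sphere separator and accepts once the resulting partition has both parts of size at most $\beta|V_H|$, $\beta=(d+1+\epsilon)/(d+2)$ (fixed $0<\epsilon<1$), and $O(|V_H|^{1-1/d})$ crossing edges. A decomposition tree of $H$ is obtained by applying this separator recursively until parts are single vertices. Relax partition tree of $G_p$: the upper tree consists of the top $3\log_{1/\beta}\log|G|$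 levels of a decomposition tree of $G_p$; each upper-tree leaf incident to more than $|\mathrm{outer}(G_p)|/\log^2|G|$ edges of $\mathrm{outer}(G_p)$ is refined by building a full decomposition tree on it; other upper-tree leaves are left unrefined with their vertices in arbitrary order. RelaxBalancedPartition$(G_p)$: (1) build a relax partition tree of $G_p$; (2) list vertices in left-to-right leaf order, form the red-blue array (a blue element per vertex $v$ followed by $|E(v,G-G_p)|$ red elements) and find a contiguous subarray containing half the blue and half the red elements to within one; (3) move each end of the subarray that falls strictly inside the block of an unrefined leaf left or right to a boundary of that leaf; let $V_{px}$ be vertices whose blue elements lie in the modified subarray and $V_{py}$ the rest; (4) let $G_{px},G_{py}$ be the induced subgraphs.
   Formalization: The balance $|G_{px}|=|G_{py}|\pm O(|G_p|/\log^3|G|)$ compares the numbers of vertices of $G_{px}$ and $G_{py}$, not vertices plus edges, and both balance bounds also allow an additive constant. The statement above fails without it. *)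

theory Defs
  imports "HOL-Analysis.Analysis"
begin

definition is_simplex :: "(real ^ 'd) set \<Rightarrow> bool" where
  "is_simplex s \<longleftrightarrow> finite s \<and> card s = CARD('d) + 1 \<and> \<not> affine_dependent s"

definition inradius :: "(real ^ 'd) set \<Rightarrow> real" where
  "inradius s = Sup {r. \<exists>x. ball x r \<subseteq> convex hull s}"

definition aspect_ratio :: "(real ^ 'd) set \<Rightarrow> real" where
  "aspect_ratio s = diameter s / inradius s"

definition well_shaped_mesh :: "real \<Rightarrow> (real ^ 'd) set set \<Rightarrow> bool" where
  "well_shaped_mesh rho S \<longleftrightarrow>
     finite S \<and>
     (\<forall>s\<in>S. is_simplex s \<and> aspect_ratio s \<le> rho) \<and>
     (\<forall>s\<in>S. \<forall>t\<in>S. s \<noteq> t \<longrightarrow>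
         interior (convex hull s) \<inter> interior (convex hull t) = {} \<and>
         convex hull s \<inter> convex hull t = convex hull (s \<inter> t))"

definition mesh_vertices :: "(real ^ 'd) set set \<Rightarrow> (real ^ 'd) set" where
  "mesh_vertices S = \<Union>S"

definition mesh_edge :: "(real ^ 'd) set set \<Rightarrow> real ^ 'd \<Rightarrow> real ^ 'd \<Rightarrow> bool" where
  "mesh_edge S u v \<longleftrightarrow> u \<noteq> v \<and> (\<exists>s\<in>S. u \<in> s \<and> v \<in> s)"

definition gsize :: "'a set \<Rightarrow> ('a \<Rightarrow> 'a \<Rightarrow> bool) \<Rightarrow> nat" where
  "gsize A E = card A + card {{u, v} | u v. u \<in> A \<and> v \<in> A \<and> E u v}"

text \<open>Number of edges between A and B (disjoint vertex sets), each undirected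
edge counted once via its orientation from A to B.\<close>
definition ecount :: "('a \<Rightarrow> 'a \<Rightarrow> bool) \<Rightarrow> 'a set \<Rightarrow> 'a set \<Rightarrow> nat" where
  "ecount E A B = card {(u, v). u \<in> A \<and> v \<in> B \<and> E u v}"

text \<open>outgoing(A) = E(A, G - G_p) for A inside G_p (vertex set P);
outer(G_p) = outgoing(P).\<close>
definition outgoing :: "'a set \<Rightarrow> ('a \<Rightarrow> 'a \<Rightarrow> bool) \<Rightarrow> 'a set \<Rightarrow> 'a set \<Rightarrow> nat" where
  "outgoing V E P A = ecount E A (V - P)"

text \<open>Leaf v: single-vertex leaf of a (full) decomposition tree;
Unref xs: unrefined upper-tree leaf with its vertices in the (arbitrary) order xs;
Node l r: a separator split into left and right part.\<close>
datatype 'a rtree = Leaf 'a | Unref "'a list" | Node "'a rtree" "'a rtree"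

fun vlist :: "'a rtree \<Rightarrow> 'a list" where
  "vlist (Leaf v) = [v]"
| "vlist (Unref xs) = xs"
| "vlist (Node l r) = vlist l @ vlist r"

text \<open>Acceptance condition of the geometric separator step on the vertex set
A \<union> B split into A, B: both parts at most beta |V_H|, at most
c |V_H|^(1-1/d) crossing edges.\<close>
definition split_ok :: "('a \<Rightarrow> 'a \<Rightarrow> bool) \<Rightarrow> real \<Rightarrow> real \<Rightarrow> real \<Rightarrow> 'a set \<Rightarrow> 'a set \<Rightarrow> bool" where
  "split_ok E beta c d A B \<longleftrightarrow>
     A \<noteq> {} \<and> B \<noteq> {} \<and> A \<inter> B = {} \<and>
     real (card A) \<le> beta * real (card (A \<union> B)) \<and>
     real (card B) \<le> beta * real (card (A \<union> B)) \<and>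
     real (ecount E A B) \<le> c * real (card (A \<union> B)) powr (1 - 1 / d)"

fun full_dtree :: "('a set \<Rightarrow> 'a set \<Rightarrow> bool) \<Rightarrow> 'a rtree \<Rightarrow> bool" where
  "full_dtree sp (Leaf v) = True"
| "full_dtree sp (Unref xs) = False"
| "full_dtree sp (Node l r) =
     (sp (set (vlist l)) (set (vlist r)) \<and> full_dtree sp l \<and> full_dtree sp r)"

text \<open>upper_ok sp hv k t: t is a relax partition (sub)tree whose upper tree has
k remaining levels; hv H says that upper-tree leaf H is heavy (must be refined).\<close>
fun upper_ok :: "('a set \<Rightarrow> 'a set \<Rightarrow> bool) \<Rightarrow> ('a set \<Rightarrow> bool) \<Rightarrow> nat \<Rightarrow> 'a rtree \<Rightarrow> bool" where
  "upper_ok sp hv k (Leaf v) = hv {v}"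
| "upper_ok sp hv k (Unref xs) = (distinct xs \<and> \<not> hv (set xs) \<and> (k = 0 \<or> length xs = 1))"
| "upper_ok sp hv k (Node l r) =
     ((k > 0 \<and> sp (set (vlist l)) (set (vlist r)) \<and> upper_ok sp hv (k - 1) l \<and> upper_ok sp hv (k - 1) r)
      \<or> (k = 0 \<and> hv (set (vlist (Node l r))) \<and> full_dtree sp (Node l r)))"

definition upper_depth :: "real \<Rightarrow> nat \<Rightarrow> nat" where
  "upper_depth beta sizeG = nat \<lceil>3 * log (1 / beta) (log 2 (real sizeG))\<rceil>"

definition heavy :: "'a set \<Rightarrow> ('a \<Rightarrow> 'a \<Rightarrow> bool) \<Rightarrow> 'a set \<Rightarrow> 'a set \<Rightarrow> bool" where
  "heavy V E P H \<longleftrightarrow>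
     real (outgoing V E P H) > real (outgoing V E P P) / (log 2 (real (gsize V E))) ^ 2"

definition relax_tree :: "'a set \<Rightarrow> ('a \<Rightarrow> 'a \<Rightarrow> bool) \<Rightarrow> real \<Rightarrow> real \<Rightarrow> real \<Rightarrow> 'a set \<Rightarrow> 'a rtree \<Rightarrow> bool" where
  "relax_tree V E beta c d P t \<longleftrightarrow>
     upper_ok (split_ok E beta c d) (heavy V E P) (upper_depth beta (gsize V E)) t \<and>
     distinct (vlist t) \<and> set (vlist t) = P"

text \<open>Segments of the leaf order; the flag marks unrefined leaves.\<close>
fun segs :: "'a rtree \<Rightarrow> ('a list \<times> bool) list" where
  "segs (Leaf v) = [([v], False)]"
| "segs (Unref xs) = [(xs, True)]"
| "segs (Node l r) = segs l @ segs r"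

text \<open>Each vertex v occupies a block of 1 + |E(v, G - G_p)| array cells: its blue
element followed by its red elements.  wsum gives the total length of the blocks
of a vertex list; array positions are 0-based and a subarray is [i, j).\<close>
definition wsum :: "'a set \<Rightarrow> ('a \<Rightarrow> 'a \<Rightarrow> bool) \<Rightarrow> 'a set \<Rightarrow> 'a list \<Rightarrow> nat" where
  "wsum V E P xs = sum_list (map (\<lambda>v. 1 + outgoing V E P {v}) xs)"

definition bluepos :: "'a set \<Rightarrow> ('a \<Rightarrow> 'a \<Rightarrow> bool) \<Rightarrow> 'a set \<Rightarrow> 'a list \<Rightarrow> nat \<Rightarrow> nat" where
  "bluepos V E P vs n = wsum V E P (take n vs)"

definition blue_in :: "'a set \<Rightarrow> ('a \<Rightarrow> 'a \<Rightarrow> bool) \<Rightarrow> 'a set \<Rightarrow> 'a list \<Rightarrow> nat \<Rightarrow> nat \<Rightarrow> nat" where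
  "blue_in V E P vs i j = card {n. n < length vs \<and> i \<le> bluepos V E P vs n \<and> bluepos V E P vs n < j}"

definition seg_start :: "'a set \<Rightarrow> ('a \<Rightarrow> 'a \<Rightarrow> bool) \<Rightarrow> 'a set \<Rightarrow> ('a list \<times> bool) list \<Rightarrow> nat \<Rightarrow> nat" where
  "seg_start V E P sg m = wsum V E P (concat (map fst (take m sg)))"

definition seg_end :: "'a set \<Rightarrow> ('a \<Rightarrow> 'a \<Rightarrow> bool) \<Rightarrow> 'a set \<Rightarrow> ('a list \<times> bool) list \<Rightarrow> nat \<Rightarrow> nat" where
  "seg_end V E P sg m = seg_start V E P sg m + wsum V E P (fst (sg ! m))"

text \<open>Step (3): an end e strictly inside the block of an unrefined leaf is moved to
one of the two boundaries of that block; otherwise it stays.\<close>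
definition moved_end :: "'a set \<Rightarrow> ('a \<Rightarrow> 'a \<Rightarrow> bool) \<Rightarrow> 'a set \<Rightarrow> ('a list \<times> bool) list \<Rightarrow> nat \<Rightarrow> nat \<Rightarrow> bool" where
  "moved_end V E P sg e e' \<longleftrightarrow>
     (if \<exists>m < length sg. snd (sg ! m) \<and> seg_start V E P sg m < e \<and> e < seg_end V E P sg m
      then (\<exists>m < length sg. snd (sg ! m) \<and> seg_start V E P sg m < e \<and> e < seg_end V E P sg m \<and>
                (e' = seg_start V E P sg m \<or> e' = seg_end V E P sg m))
      else e' = e)"

text \<open>Px is a possible vertex set V_px output by RelaxBalancedPartition(G_p), where
G_p is induced by P in the graph (V, E), for separator parameters beta, c, d.\<close>
definition rbp_output :: "'a set \<Rightarrow> ('a \<Rightarrow> 'a \<Rightarrow> bool) \<Rightarrow> real \<Rightarrow> real \<Rightarrow> real \<Rightarrow> 'a set \<Rightarrow> 'a set \<Rightarrow> bool" where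
  "rbp_output V E beta c d P Px \<longleftrightarrow>
     (\<exists>t i j i' j'.
        relax_tree V E beta c d P t \<and>
        (let vs = vlist t; sg = segs t; B = length vs; R = outgoing V E P P;
             b = blue_in V E P vs i j; r = (j - i) - b in
          i \<le> j \<and> j \<le> wsum V E P vs \<and>
          \<bar>2 * real b - real B\<bar> \<le> 2 \<and> \<bar>2 * real r - real R\<bar> \<le> 2 \<and>
          moved_end V E P sg i i' \<and> moved_end V E P sg j j' \<and>
          Px = {vs ! n | n. n < length vs \<and> i' \<le> bluepos V E P vs n \<and> bluepos V E P vs n < j'}))"

end

theory Submission
  imports Defs
begin


lemma simplex_ball:
  fixes s :: "(real ^ 'd) set"
  assumes "is_simplex s" "aspect_ratio s \<le> rho"
  shows "\<exists>x r. r > 0 \<and> ball x r \<subseteq> convex hull s \<and> diameter s \<le> 2 * rho * r \<and> 0 < diameter s"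
proof -
  have fin: "finite s" and cs: "card s = CARD('d) + 1" and ind: "\<not> affine_dependent s"
    using assms(1) unfolding is_simplex_def by auto
  have "interior (convex hull s) \<noteq> {}"
    using interior_convex_hull_eq_empty[of s] cs ind by simp
  then obtain x0 where "x0 \<in> interior (convex hull s)" by blast
  then obtain e where e: "e > 0" "ball x0 e \<subseteq> convex hull s"
    unfolding mem_interior by blast
  have "s \<noteq> {}" using cs by auto
  then obtain v where v: "v \<in> s" by auto
  define D where "D = diameter s"
  have bs: "bounded s" using fin by (simp add: finite_imp_bounded)
  have sc: "s \<subseteq> cball v D" using diameter_bounded_bound[OF bs v] unfolding D_def
    by (auto simp: dist_commute)
  have hc: "convex hull s \<subseteq> cball v D" using hull_minimal[of s "cball v D" convex] sc convex_cball by blast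
  define Q where "Q = {r. \<exists>x. ball x r \<subseteq> convex hull s}"
  have bdd: "bdd_above Q"
  proof (rule bdd_aboveI)
    fix r assume "r \<in> Q"
    then obtain x where x: "ball x r \<subseteq> convex hull s" unfolding Q_def by auto
    show "r \<le> D"
    proof (cases "r < 0")
      case True
      have "0 \<le> D" unfolding D_def using diameter_ge_0[OF bs] .
      then show ?thesis using True by simp
    next
      case False
      have "diameter (ball x r) \<le> diameter (cball v D)"
        using diameter_subset[OF subset_trans[OF x hc]] by simp
      moreover have "0 \<le> D" unfolding D_def using diameter_ge_0[OF bs] .
      ultimately show ?thesis using False by simp
    qed
  qed
  have eQ: "e \<in> Q" using e unfolding Q_def by auto
  have ipos: "inradius s \<ge> e" unfolding inradius_def Q_def[symmetric]
    using cSup_upper[OF eQ bdd] .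
  have "inradius s / 2 < inradius s" using ipos e by simp
  then obtain r where rQ: "r \<in> Q" and rgt: "inradius s / 2 < r"
    using less_cSupE[of "inradius s / 2" Q] eQ unfolding inradius_def Q_def[symmetric] by blast
  then obtain x where x: "ball x r \<subseteq> convex hull s" unfolding Q_def by auto
  have rpos: "r > 0" using rgt ipos e by simp
  have D0: "0 \<le> D" unfolding D_def using diameter_ge_0[OF bs] .
  have "r \<le> D"
    using diameter_subset[OF subset_trans[OF x hc]] rpos D0 by simp
  have Dpos: "0 < D" using \<open>r \<le> D\<close> rpos by simp
  have "D / inradius s \<le> rho" using assms(2) unfolding aspect_ratio_def D_def .
  hence "D \<le> rho * inradius s" using ipos e by (simp add: divide_le_eq)
  moreover have "0 < D / inradius s" using Dpos ipos e by simp
  hence "rho \<ge> 0" using \<open>D / inradius s \<le> rho\<close> by linarith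
  moreover have "inradius s \<le> 2 * r" using rgt by simp
  ultimately have "D \<le> rho * (2 * r)" using mult_left_mono[of "inradius s" "2*r" rho] by linarith
  hence "D \<le> 2 * rho * r" by (simp add: algebra_simps)
  thus ?thesis using rpos x Dpos unfolding D_def by blast
qed

lemma hull_in_cball:
  fixes s :: "(real ^ 'd) set"
  assumes "finite s" "v \<in> s"
  shows "convex hull s \<subseteq> cball v (diameter s)"
proof -
  have bs: "bounded s" using assms(1) by (simp add: finite_imp_bounded)
  have sc: "s \<subseteq> cball v (diameter s)" using diameter_bounded_bound[OF bs assms(2)]
    by (auto simp: dist_commute)
  show ?thesis using hull_minimal[of s "cball v (diameter s)" convex] sc convex_cball by blast
qed

lemma star_bound:
  fixes S :: "(real ^ 'd) set set"
  assumes ws: "well_shaped_mesh rho S"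
  shows "real (card {s\<in>S. v \<in> s}) \<le> (1 + 2 * \<bar>rho\<bar>) ^ CARD('d)"
proof (cases "{s\<in>S. v \<in> s} = {}")
  case True
  have "0 \<le> (1 + 2 * \<bar>rho\<bar>) ^ CARD('d)" by simp
  then show ?thesis unfolding True by simp
next
  case False
  define T where "T = {s\<in>S. v \<in> s}"
  have finS: "finite S" using ws unfolding well_shaped_mesh_def by auto
  have finT: "finite T" unfolding T_def using finS by simp
  have Tne: "T \<noteq> {}" using False unfolding T_def .
  have simp_T: "\<And>s. s \<in> T \<Longrightarrow> is_simplex s \<and> aspect_ratio s \<le> rho"
    using ws unfolding well_shaped_mesh_def T_def by auto
  have "\<forall>s\<in>T. \<exists>xr. snd xr > 0 \<and> ball (fst xr) (snd xr) \<subseteq> convex hull s \<and>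
        diameter s \<le> 2 * rho * snd xr \<and> 0 < diameter s"
    using simplex_ball simp_T by fastforce
  then obtain g where g: "\<And>s. s \<in> T \<Longrightarrow> snd (g s) > 0 \<and> ball (fst (g s)) (snd (g s)) \<subseteq> convex hull s \<and>
        diameter s \<le> 2 * rho * snd (g s) \<and> 0 < diameter s"
    by metis
  define x where "x (s :: (real ^ 'd) set) = fst (g s)" for s
  define r where "r (s :: (real ^ 'd) set) = snd (g s)" for s
  have rpos: "\<And>s. s \<in> T \<Longrightarrow> r s > 0" using g unfolding r_def by auto
  have xb: "\<And>s. s \<in> T \<Longrightarrow> ball (x s) (r s) \<subseteq> convex hull s" using g unfolding r_def x_def by auto
  have Dr: "\<And>s. s \<in> T \<Longrightarrow> diameter s \<le> 2 * rho * r s" using g unfolding r_def by auto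
  have Dpos: "\<And>s. s \<in> T \<Longrightarrow> 0 < diameter s" using g by auto
  obtain s0 where s0: "s0 \<in> T" using Tne by auto
  have rhopos: "rho > 0"
  proof (rule ccontr)
    assume "\<not> rho > 0"
    hence "2 * rho * r s0 \<le> 0" using rpos[OF s0] by (simp add: mult_nonpos_nonneg)
    thus False using Dr[OF s0] Dpos[OF s0] by linarith
  qed
  define h where "h = Min (diameter ` T)"
  have hpos: "h > 0" unfolding h_def using finT Tne Dpos by auto
  have hle: "\<And>s. s \<in> T \<Longrightarrow> h \<le> diameter s" unfolding h_def using finT by auto
  define lam where "lam (s :: (real ^ 'd) set) = h / diameter s" for s
  define c where "c (s :: (real ^ 'd) set) = v + lam s *\<^sub>R (x s - v)" for s
  define q where "q = h / (2 * rho)"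
  have qpos: "q > 0" unfolding q_def using hpos rhopos by simp
  have inT: "\<And>s. s \<in> T \<Longrightarrow> v \<in> s \<and> finite s" using simp_T unfolding T_def is_simplex_def by auto
  have A: "ball (c s) q \<subseteq> interior (convex hull s)" if sT: "s \<in> T" for s
  proof -
    have lpos: "lam s > 0" unfolding lam_def using hpos Dpos[OF sT] by simp
    have lle: "lam s \<le> 1" unfolding lam_def using hle[OF sT] Dpos[OF sT] by simp
    have "q \<le> lam s * r s"
    proof -
      have "h * diameter s \<le> h * (2 * rho * r s)" using Dr[OF sT] hpos by simp
      hence "h / (2 * rho) \<le> h * r s / diameter s"
        using rhopos Dpos[OF sT] by (simp add: divide_simps algebra_simps)
      thus ?thesis unfolding q_def lam_def by simp
    qed
    have "ball (c s) (lam s * r s) \<subseteq> convex hull s"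
    proof
      fix y assume y: "y \<in> ball (c s) (lam s * r s)"
      define z where "z = v + (1 / lam s) *\<^sub>R (y - v)"
      have "x s - z = (1 / lam s) *\<^sub>R (c s - y)"
        unfolding z_def c_def using lpos by (simp add: algebra_simps)
      hence "dist (x s) z = dist (c s) y / lam s"
        using lpos by (simp add: dist_norm)
      also have "\<dots> < r s" using y lpos by (simp add: divide_simps mult.commute)
      finally have "z \<in> convex hull s" using xb[OF sT] by auto
      moreover have "v \<in> convex hull s" using inT[OF sT] by (simp add: hull_inc)
      ultimately have "(1 - lam s) *\<^sub>R v + lam s *\<^sub>R z \<in> convex hull s"
        using convexD_alt[OF convex_convex_hull, of v s z "lam s"] lpos lle by simp
      moreover have "(1 - lam s) *\<^sub>R v + lam s *\<^sub>R z = y"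
        unfolding z_def using lpos by (simp add: algebra_simps)
      ultimately show "y \<in> convex hull s" by simp
    qed
    hence "ball (c s) q \<subseteq> convex hull s" using \<open>q \<le> lam s * r s\<close>
      by (meson subset_ball subset_trans)
    thus ?thesis by (simp add: interior_maximal)
  qed
  have B: "ball (c s) q \<subseteq> ball v (h + q)" if sT: "s \<in> T" for s
  proof -
    have lpos: "lam s > 0" unfolding lam_def using hpos Dpos[OF sT] by simp
    have "x s \<in> convex hull s" using xb[OF sT] rpos[OF sT] by auto
    hence "dist v (x s) \<le> diameter s" using hull_in_cball[of s v] inT[OF sT] by auto
    hence "dist v (c s) \<le> h"
      unfolding c_def lam_def using Dpos[OF sT] hpos
      by (simp add: dist_norm norm_minus_commute divide_simps)
    show ?thesis
    proof
      fix y assume "y \<in> ball (c s) q"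
      hence "dist (c s) y < q" by simp
      hence "dist v y < h + q" using \<open>dist v (c s) \<le> h\<close> dist_triangle[of v y "c s"] by linarith
      thus "y \<in> ball v (h + q)" by simp
    qed
  qed
  have disj: "disjoint_family_on (\<lambda>s. ball (c s) q) T"
    unfolding disjoint_family_on_def
  proof (intro ballI impI)
    fix s t assume "s \<in> T" "t \<in> T" "s \<noteq> t"
    hence "interior (convex hull s) \<inter> interior (convex hull t) = {}"
      using ws unfolding well_shaped_mesh_def T_def by auto
    thus "ball (c s) q \<inter> ball (c t) q = {}" using A \<open>s \<in> T\<close> \<open>t \<in> T\<close> by blast
  qed
  define u where "u = measure lborel (ball (0 :: real ^ 'd) 1)"
  have upos: "u > 0" unfolding u_def using content_ball_pos[of 1 "0 :: real ^ 'd"] by simp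
  have "measure lborel (\<Union>s\<in>T. ball (c s) q) = (\<Sum>s\<in>T. measure lborel (ball (c s) q))"
    using finT disj by (intro measure_finite_Union) (use emeasure_lborel_ball_finite less_imp_neq in auto)
  also have "\<dots> = real (card T) * (q ^ CARD('d) * u)"
    using content_ball_conv_unit_ball[of q "c s" for s :: "(real ^ 'd) set"] qpos unfolding u_def by simp
  finally have eq: "measure lborel (\<Union>s\<in>T. ball (c s) q) = real (card T) * (q ^ CARD('d) * u)" .
  have "measure lborel (\<Union>s\<in>T. ball (c s) q) \<le> measure lborel (ball v (h + q))"
  proof (intro measure_mono_fmeasurable)
    show "(\<Union>s\<in>T. ball (c s) q) \<subseteq> ball v (h + q)" using B by auto
    show "(\<Union>s\<in>T. ball (c s) q) \<in> sets lborel" by (auto intro: borel_open)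
    show "ball v (h + q) \<in> fmeasurable lborel"
      unfolding fmeasurable_def using emeasure_lborel_ball_finite[of v "h+q"] by auto
  qed
  also have "\<dots> = (h + q) ^ CARD('d) * u"
    using content_ball_conv_unit_ball[of "h + q" v] qpos hpos unfolding u_def by simp
  finally have "real (card T) * q ^ CARD('d) \<le> (h + q) ^ CARD('d)"
    using eq upos by (simp add: mult.assoc)
  hence "real (card T) \<le> (h + q) ^ CARD('d) / q ^ CARD('d)"
    using qpos by (simp add: divide_simps)
  also have "\<dots> = ((h + q) / q) ^ CARD('d)" by (simp add: power_divide)
  also have "(h + q) / q = 1 + 2 * \<bar>rho\<bar>"
    unfolding q_def using hpos rhopos by (simp add: divide_simps algebra_simps)
  finally show ?thesis unfolding T_def .
qed


lemma real_le_nat_ceiling: "real k \<le> x \<Longrightarrow> k \<le> nat \<lceil>x\<rceil>"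
proof -
  assume "real k \<le> x"
  hence "\<lceil>real k\<rceil> \<le> \<lceil>x\<rceil>" by (rule ceiling_mono)
  hence "int k \<le> \<lceil>x\<rceil>" by simp
  thus ?thesis by simp
qed

lemma degree_bound:
  fixes S :: "(real ^ 'd) set set"
  assumes ws: "well_shaped_mesh rho S"
  shows "outgoing (mesh_vertices S) (mesh_edge S) P {v} \<le> nat \<lceil>(1 + 2 * \<bar>rho\<bar>) ^ CARD('d)\<rceil> * (CARD('d) + 1)"
proof -
  define T where "T = {s\<in>S. v \<in> s}"
  have finS: "finite S" using ws unfolding well_shaped_mesh_def by auto
  have finT: "finite T" unfolding T_def using finS by simp
  have cs: "\<And>s. s \<in> T \<Longrightarrow> card s = CARD('d) + 1 \<and> finite s"
    using ws unfolding well_shaped_mesh_def T_def is_simplex_def by auto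
  have sub: "{(u, w). u \<in> {v} \<and> w \<in> mesh_vertices S - P \<and> mesh_edge S u w} \<subseteq> {v} \<times> \<Union>T"
    unfolding mesh_edge_def T_def by auto
  have finU: "finite (\<Union>T)" using finT cs by auto
  have "outgoing (mesh_vertices S) (mesh_edge S) P {v} \<le> card ({v} \<times> \<Union>T)"
    unfolding outgoing_def ecount_def using sub finU by (intro card_mono) auto
  also have "\<dots> = card (\<Union>T)" by (simp add: card_cartesian_product)
  also have "\<dots> \<le> sum card T" using card_Union_le_sum_card[of T] by simp
  also have "\<dots> = card T * (CARD('d) + 1)" using cs by simp
  also have "\<dots> \<le> nat \<lceil>(1 + 2 * \<bar>rho\<bar>) ^ CARD('d)\<rceil> * (CARD('d) + 1)"
  proof (rule mult_le_mono1)
    show "card T \<le> nat \<lceil>(1 + 2 * \<bar>rho\<bar>) ^ CARD('d)\<rceil>"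
      using star_bound[OF ws, of v] unfolding T_def by (rule real_le_nat_ceiling)
  qed
  finally show ?thesis .
qed




lemma ecount_fin: "finite A \<Longrightarrow> finite B \<Longrightarrow> finite {(u, v). u \<in> A \<and> v \<in> B \<and> E u v}"
  by (rule finite_subset[of _ "A \<times> B"]) auto

lemma ecount_mono:
  assumes "A \<subseteq> A'" "B \<subseteq> B'" "finite A'" "finite B'"
  shows "ecount E A B \<le> ecount E A' B'"
  unfolding ecount_def using assms by (intro card_mono ecount_fin) auto

lemma ecount_Un1:
  assumes "finite A1" "finite A2" "finite B"
  shows "ecount E (A1 \<union> A2) B \<le> ecount E A1 B + ecount E A2 B"
proof -
  have "{(u, v). u \<in> A1 \<union> A2 \<and> v \<in> B \<and> E u v} =
        {(u, v). u \<in> A1 \<and> v \<in> B \<and> E u v} \<union> {(u, v). u \<in> A2 \<and> v \<in> B \<and> E u v}" (is "_ = ?X \<union> ?Y") by auto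
  thus ?thesis unfolding ecount_def using card_Un_le[of ?X ?Y] by simp
qed

lemma ecount_Un2:
  assumes "finite A" "finite B1" "finite B2"
  shows "ecount E A (B1 \<union> B2) \<le> ecount E A B1 + ecount E A B2"
proof -
  have "{(u, v). u \<in> A \<and> v \<in> B1 \<union> B2 \<and> E u v} =
        {(u, v). u \<in> A \<and> v \<in> B1 \<and> E u v} \<union> {(u, v). u \<in> A \<and> v \<in> B2 \<and> E u v}" (is "_ = ?X \<union> ?Y") by auto
  thus ?thesis unfolding ecount_def using card_Un_le[of ?X ?Y] by simp
qed

lemma ecount_Un1_disj:
  assumes "finite A1" "finite A2" "finite B" "A1 \<inter> A2 = {}"
  shows "ecount E (A1 \<union> A2) B = ecount E A1 B + ecount E A2 B"
proof -
  have "{(u, v). u \<in> A1 \<union> A2 \<and> v \<in> B \<and> E u v} =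
        {(u, v). u \<in> A1 \<and> v \<in> B \<and> E u v} \<union> {(u, v). u \<in> A2 \<and> v \<in> B \<and> E u v}" (is "_ = ?X \<union> ?Y") by auto
  moreover have "{(u, v). u \<in> A1 \<and> v \<in> B \<and> E u v} \<inter> {(u, v). u \<in> A2 \<and> v \<in> B \<and> E u v} = {}"
    using assms(4) by auto
  moreover have "card (?X \<union> ?Y) = card ?X + card ?Y"
    using assms by (intro card_Un_disjoint ecount_fin) auto
  ultimately show ?thesis unfolding ecount_def by simp
qed

lemma ecount_sym:
  assumes "\<And>u v. E u v = E v u"
  shows "ecount E A B = ecount E B A"
proof -
  have "{(u, v). u \<in> A \<and> v \<in> B \<and> E u v} = prod.swap ` {(u, v). u \<in> B \<and> v \<in> A \<and> E u v}"
  proof (rule set_eqI)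
    fix p :: "'a \<times> 'a"
    obtain u v where p: "p = (u, v)" by (cases p)
    show "p \<in> {(u, v). u \<in> A \<and> v \<in> B \<and> E u v} \<longleftrightarrow> p \<in> prod.swap ` {(u, v). u \<in> B \<and> v \<in> A \<and> E u v}"
      unfolding p image_iff using assms[of u v] by auto
  qed
  thus ?thesis unfolding ecount_def by (simp add: card_image)
qed

lemma outgoing_sum:
  assumes "finite A" "finite V"
  shows "outgoing V E P A = (\<Sum>v\<in>A. outgoing V E P {v})"
  using assms(1)
proof (induction A rule: finite_induct)
  case empty
  then show ?case by (simp add: outgoing_def ecount_def)
next
  case (insert x F)
  have "outgoing V E P (insert x F) = outgoing V E P ({x} \<union> F)" by simp
  also have "\<dots> = outgoing V E P {x} + outgoing V E P F"
    unfolding outgoing_def using insert assms by (intro ecount_Un1_disj) auto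
  finally show ?case using insert by simp
qed




fun allsplit :: "('a set \<Rightarrow> 'a set \<Rightarrow> bool) \<Rightarrow> 'a rtree \<Rightarrow> bool" where
  "allsplit sp (Leaf v) = True"
| "allsplit sp (Unref xs) = True"
| "allsplit sp (Node l r) = (sp (set (vlist l)) (set (vlist r)) \<and> allsplit sp l \<and> allsplit sp r)"

fun nocut :: "nat \<Rightarrow> 'a rtree \<Rightarrow> bool" where
  "nocut a (Leaf v) = True"
| "nocut a (Unref xs) = (a = 0 \<or> length xs \<le> a)"
| "nocut a (Node l r) = (if a \<le> length (vlist l) then nocut a l else nocut (a - length (vlist l)) r)"

lemma full_allsplit: "full_dtree sp t \<Longrightarrow> allsplit sp t"
  by (induction t) auto

lemma upper_allsplit: "upper_ok sp hv k t \<Longrightarrow> allsplit sp t"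
  by (induction t arbitrary: k) (auto simp: full_allsplit)

lemma full_segs: "full_dtree sp t \<Longrightarrow> (xs, True) \<notin> set (segs t)"
  by (induction t) auto

lemma upper_segs: "upper_ok sp hv k t \<Longrightarrow> (xs, True) \<in> set (segs t) \<Longrightarrow> \<not> hv (set xs) \<and> distinct xs"
proof (induction t arbitrary: k)
  case (Node l r)
  then show ?case using full_segs[of sp "Node l r" xs] by (auto split: if_splits)
qed auto

lemma concat_segs: "concat (map fst (segs t)) = vlist t"
  by (induction t) auto

lemma upper_len:
  assumes "upper_ok (split_ok E beta c d) hv k t" "distinct (vlist t)" "0 < beta"
    "(xs, True) \<in> set (segs t)"
  shows "length xs = 1 \<or> real (length xs) * (1 / beta) ^ k \<le> real (length (vlist t))"
  using assms
proof (induction t arbitrary: k)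
  case (Leaf v)
  then show ?case by simp
next
  case (Unref ys)
  then show ?case by auto
next
  case (Node l r)
  show ?case
  proof (cases "k > 0 \<and> split_ok E beta c d (set (vlist l)) (set (vlist r)) \<and>
      upper_ok (split_ok E beta c d) hv (k - 1) l \<and> upper_ok (split_ok E beta c d) hv (k - 1) r")
    case True
    hence sp: "split_ok E beta c d (set (vlist l)) (set (vlist r))" and k: "k = Suc (k - 1)" by auto
    have dl: "distinct (vlist l)" and dr: "distinct (vlist r)"
      and dj: "set (vlist l) \<inter> set (vlist r) = {}" using Node.prems(2) by auto
    have cl: "card (set (vlist l)) = length (vlist l)" using dl by (simp add: distinct_card)
    have cr: "card (set (vlist r)) = length (vlist r)" using dr by (simp add: distinct_card)
    have cu: "card (set (vlist l) \<union> set (vlist r)) = length (vlist l) + length (vlist r)"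
      using card_Un_disjoint[OF finite_set finite_set dj] cl cr by simp
    have bl: "real (length (vlist l)) \<le> beta * real (length (vlist (Node l r)))"
      using sp cl cu unfolding split_ok_def by simp
    have br: "real (length (vlist r)) \<le> beta * real (length (vlist (Node l r)))"
      using sp cr cu unfolding split_ok_def by simp
    have mem: "(xs, True) \<in> set (segs l) \<or> (xs, True) \<in> set (segs r)" using Node.prems(4) by simp
    show ?thesis
    proof (cases "length xs = 1")
      case False
      have "real (length xs) * (1 / beta) ^ (k - 1) \<le> real (length (vlist l))
          \<or> real (length xs) * (1 / beta) ^ (k - 1) \<le> real (length (vlist r))"
        using mem Node.IH[of "k - 1"] True dl dr Node.prems(3) False by blast
      hence "real (length xs) * (1 / beta) ^ (k - 1) \<le> beta * real (length (vlist (Node l r)))"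
        using bl br by linarith
      hence "(1 / beta) * (real (length xs) * (1 / beta) ^ (k - 1)) \<le> real (length (vlist (Node l r)))"
        using Node.prems(3) by (simp add: divide_simps mult.commute mult.left_commute)
      moreover have "(1 / beta) * (real (length xs) * (1 / beta) ^ (k - 1)) = real (length xs) * (1 / beta) ^ k"
        by (subst (2) k) (simp add: algebra_simps)
      ultimately show ?thesis by simp
    qed simp
  next
    case False
    hence "full_dtree (split_ok E beta c d) (Node l r)" using Node.prems(1) by auto
    thus ?thesis using full_segs Node.prems(4) by blast
  qed
qed

lemma ecount_empty1: "ecount E {} B = 0" by (simp add: ecount_def)
lemma ecount_empty2: "ecount E A {} = 0" by (simp add: ecount_def)

lemma prefix_cut:
  assumes "allsplit (split_ok E beta c d) t" "distinct (vlist t)" "nocut a t"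
    and b0: "0 < beta" and b1: "beta < 1" and al: "0 < 1 - 1 / d"
    and K: "K = max c 0 / (1 - beta powr (1 - 1 / d))"
  shows "real (ecount E (set (take a (vlist t))) (set (drop a (vlist t))))
           \<le> K * real (length (vlist t)) powr (1 - 1 / d)"
  using assms(1-3)
proof (induction t arbitrary: a)
  define al where "al = 1 - 1 / d"
  have bal: "beta powr al < 1" using b0 b1 al unfolding al_def by (simp add: powr01_less_one)
  have K0: "K \<ge> 0" unfolding K al_def[symmetric] using bal by simp
  {
    case (Leaf v)
    have "take a [v] = [] \<or> drop a [v] = []" by (cases a) auto
    then show ?case using K0 by (auto simp: ecount_empty1 ecount_empty2)
  next
    case (Unref xs)
    have "take a xs = [] \<or> drop a xs = []" using Unref.prems(3) by auto
    then show ?case using K0 by (auto simp: ecount_empty1 ecount_empty2)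
  next
    case (Node l r)
    let ?vl = "vlist l" and ?vr = "vlist r"
    define nl where "nl = length ?vl"
    define nr where "nr = length ?vr"
    define n where "n = nl + nr"
    have sp: "split_ok E beta c d (set ?vl) (set ?vr)" using Node.prems(1) by simp
    have asl: "allsplit (split_ok E beta c d) l" and asr: "allsplit (split_ok E beta c d) r"
      using Node.prems(1) by auto
    have dl: "distinct ?vl" and dr: "distinct ?vr"
      and dj: "set ?vl \<inter> set ?vr = {}" using Node.prems(2) by auto
    have cl: "card (set ?vl) = nl" using dl unfolding nl_def by (simp add: distinct_card)
    have cr: "card (set ?vr) = nr" using dr unfolding nr_def by (simp add: distinct_card)
    have cu: "card (set ?vl \<union> set ?vr) = n"
      using card_Un_disjoint[OF finite_set finite_set dj] cl cr unfolding n_def by simp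
    have bl: "real nl \<le> beta * real n" using sp cl cu unfolding split_ok_def by simp
    have br: "real nr \<le> beta * real n" using sp cr cu unfolding split_ok_def by simp
    have Y: "real (ecount E (set ?vl) (set ?vr)) \<le> max c 0 * real n powr al"
    proof -
      have "real (ecount E (set ?vl) (set ?vr)) \<le> c * real n powr al"
        using sp cu unfolding split_ok_def al_def by simp
      also have "\<dots> \<le> max c 0 * real n powr al" by (intro mult_right_mono) auto
      finally show ?thesis .
    qed
    have pw: "real m powr al \<le> beta powr al * real n powr al" if "real m \<le> beta * real n" for m
    proof -
      have "real m powr al \<le> (beta * real n) powr al"
        using that al b0 unfolding al_def by (intro powr_mono2) auto
      also have "\<dots> = beta powr al * real n powr al" using b0 by (simp add: powr_mult)
      finally show ?thesis .
    qed
    have Keq: "K * beta powr al + max c 0 = K"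
      unfolding K al_def[symmetric] using bal by (simp add: divide_simps algebra_simps)
    have key: "real X + real Y' \<le> K * real n powr al"
      if "real X \<le> K * real m powr al" "real m \<le> beta * real n"
         "real Y' \<le> max c 0 * real n powr al" for X Y' m
    proof -
      have "K * real m powr al \<le> K * (beta powr al * real n powr al)"
        using pw[OF that(2)] K0 by (intro mult_left_mono) auto
      hence "real X + real Y' \<le> K * beta powr al * real n powr al + max c 0 * real n powr al"
        using that(1,3) by (simp add: algebra_simps)
      also have "\<dots> = (K * beta powr al + max c 0) * real n powr al" by (simp add: algebra_simps)
      finally show ?thesis using Keq by simp
    qed
    show ?case
    proof (cases "a \<le> nl")
      case True
      have nc: "nocut a l" using Node.prems(3) True unfolding nl_def by simp
      have IH: "real (ecount E (set (take a ?vl)) (set (drop a ?vl))) \<le> K * real nl powr al"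
        using Node.IH(1)[OF asl dl nc] unfolding nl_def al_def by simp
      have tk: "take a (vlist (Node l r)) = take a ?vl" and dp: "drop a (vlist (Node l r)) = drop a ?vl @ ?vr"
        using True unfolding nl_def by auto
      have "ecount E (set (take a ?vl)) (set (drop a ?vl @ ?vr))
          \<le> ecount E (set (take a ?vl)) (set (drop a ?vl)) + ecount E (set (take a ?vl)) (set ?vr)"
        using ecount_Un2[of "set (take a ?vl)" "set (drop a ?vl)" "set ?vr" E] by simp
      also have "ecount E (set (take a ?vl)) (set ?vr) \<le> ecount E (set ?vl) (set ?vr)"
        by (intro ecount_mono) (auto dest: in_set_takeD)
      finally have "real (ecount E (set (take a (vlist (Node l r)))) (set (drop a (vlist (Node l r)))))
          \<le> real (ecount E (set (take a ?vl)) (set (drop a ?vl))) + real (ecount E (set ?vl) (set ?vr))"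
        unfolding tk dp by linarith
      also have "\<dots> \<le> K * real n powr al" using key[OF IH bl Y] .
      finally show ?thesis unfolding n_def nl_def nr_def al_def by simp
    next
      case False
      have nc: "nocut (a - nl) r" using Node.prems(3) False unfolding nl_def by simp
      have IH: "real (ecount E (set (take (a - nl) ?vr)) (set (drop (a - nl) ?vr))) \<le> K * real nr powr al"
        using Node.IH(2)[OF asr dr nc] unfolding nr_def al_def by simp
      have tk: "take a (vlist (Node l r)) = ?vl @ take (a - nl) ?vr" and dp: "drop a (vlist (Node l r)) = drop (a - nl) ?vr"
        using False unfolding nl_def by auto
      have "ecount E (set (?vl @ take (a - nl) ?vr)) (set (drop (a - nl) ?vr))
          \<le> ecount E (set ?vl) (set (drop (a - nl) ?vr)) + ecount E (set (take (a - nl) ?vr)) (set (drop (a - nl) ?vr))"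
        using ecount_Un1[of "set ?vl" "set (take (a - nl) ?vr)" "set (drop (a - nl) ?vr)" E] by simp
      also have "ecount E (set ?vl) (set (drop (a - nl) ?vr)) \<le> ecount E (set ?vl) (set ?vr)"
        by (intro ecount_mono) (auto dest: in_set_dropD)
      finally have "real (ecount E (set (take a (vlist (Node l r)))) (set (drop a (vlist (Node l r)))))
          \<le> real (ecount E (set (take (a - nl) ?vr)) (set (drop (a - nl) ?vr))) + real (ecount E (set ?vl) (set ?vr))"
        unfolding tk dp by linarith
      also have "\<dots> \<le> K * real n powr al" using key[OF IH br Y] .
      finally show ?thesis unfolding n_def nl_def nr_def al_def by simp
    qed
  }
qed

definition ofs :: "('a list \<times> bool) list \<Rightarrow> nat \<Rightarrow> nat" where
  "ofs sg m = length (concat (map fst (take m sg)))"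

definition NC :: "nat \<Rightarrow> ('a list \<times> bool) list \<Rightarrow> bool" where
  "NC a sg \<longleftrightarrow> (\<forall>m < length sg. snd (sg ! m) \<longrightarrow>
      \<not> (ofs sg m < a \<and> a < ofs sg m + length (fst (sg ! m))))"

lemma nc_nocut: "NC a (segs t) \<Longrightarrow> nocut a t"
proof (induction t arbitrary: a)
  case (Leaf v)
  then show ?case by simp
next
  case (Unref xs)
  then show ?case unfolding NC_def ofs_def by auto
next
  case (Node l r)
  let ?SL = "segs l" and ?SR = "segs r"
  have lenl: "length (concat (map fst ?SL)) = length (vlist l)" by (simp add: concat_segs)
  show ?case
  proof (cases "a \<le> length (vlist l)")
    case True
    have "NC a ?SL" unfolding NC_def
    proof (intro allI impI)
      fix m assume m: "m < length ?SL" "snd (?SL ! m)"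
      have "(?SL @ ?SR) ! m = ?SL ! m" "take m (?SL @ ?SR) = take m ?SL" using m(1) by (auto simp: nth_append)
      thus "\<not> (ofs ?SL m < a \<and> a < ofs ?SL m + length (fst (?SL ! m)))"
        using Node.prems m unfolding NC_def ofs_def by (metis segs.simps(3) length_append trans_less_add1)
    qed
    thus ?thesis using True Node.IH(1) by simp
  next
    case False
    have "NC (a - length (vlist l)) ?SR" unfolding NC_def
    proof (intro allI impI)
      fix m assume m: "m < length ?SR" "snd (?SR ! m)"
      define m' where "m' = length ?SL + m"
      have e1: "(?SL @ ?SR) ! m' = ?SR ! m" unfolding m'_def by (simp add: nth_append)
      have e2: "take m' (?SL @ ?SR) = ?SL @ take m ?SR" unfolding m'_def by simp
      have "m' < length (segs (Node l r))" using m(1) unfolding m'_def by simp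
      moreover have "snd (segs (Node l r) ! m')" using e1 m(2) by simp
      ultimately have "\<not> (ofs (segs (Node l r)) m' < a \<and> a < ofs (segs (Node l r)) m' + length (fst (segs (Node l r) ! m')))"
        using Node.prems unfolding NC_def by blast
      moreover have "ofs (segs (Node l r)) m' = length (vlist l) + ofs ?SR m"
        unfolding ofs_def using e2 lenl by simp
      ultimately show "\<not> (ofs ?SR m < a - length (vlist l) \<and> a - length (vlist l) < ofs ?SR m + length (fst (?SR ! m)))"
        using e1 False by auto
    qed
    thus ?thesis using False Node.IH(2) by simp
  qed
qed




lemma wsum_append: "wsum V E P (xs @ ys) = wsum V E P xs + wsum V E P ys"
  unfolding wsum_def by simp

lemma wsum_eq: "wsum V E P xs = length xs + sum_list (map (\<lambda>v. outgoing V E P {v}) xs)"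
  unfolding wsum_def by (induction xs) auto

lemma downward_closed_eq:
  fixes S :: "nat set"
  assumes "finite S" "\<And>n k. n \<in> S \<Longrightarrow> k < n \<Longrightarrow> k \<in> S"
  shows "S = {..<card S}"
proof (cases "S = {}")
  case True
  then show ?thesis by simp
next
  case False
  define m where "m = Max S"
  have "S = {..m}"
  proof
    show "S \<subseteq> {..m}" using Max_ge[OF assms(1)] unfolding m_def by auto
    show "{..m} \<subseteq> S"
    proof
      fix k assume "k \<in> {..m}"
      hence "k = m \<or> k < m" by auto
      moreover have "m \<in> S" unfolding m_def using Max_in[OF assms(1) False] .
      ultimately show "k \<in> S" using assms(2) by auto
    qed
  qed
  thus ?thesis by (simp add: lessThan_Suc_atMost[symmetric])
qed

context
  fixes V :: "'a set" and E :: "'a \<Rightarrow> 'a \<Rightarrow> bool" and P :: "'a set" and vs :: "'a list"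
begin

abbreviation "bp \<equiv> bluepos V E P vs"

definition Bc :: "nat \<Rightarrow> nat" where
  "Bc e = card {n. n < length vs \<and> bp n < e}"

lemma bp_split: "n \<le> m \<Longrightarrow> bp m = bp n + wsum V E P (take (m - n) (drop n vs))"
proof -
  assume "n \<le> m"
  hence "take m vs = take n vs @ take (m - n) (drop n vs)" using take_add[of n "m - n" vs] by simp
  thus ?thesis unfolding bluepos_def by (simp add: wsum_append)
qed

lemma bp_mono: "n \<le> m \<Longrightarrow> bp n \<le> bp m"
  using bp_split by simp

lemma bp_strict: "n < m \<Longrightarrow> m \<le> length vs \<Longrightarrow> bp n < bp m"
proof -
  assume a: "n < m" "m \<le> length vs"
  have "length (take (m - n) (drop n vs)) = m - n" using a by simp
  hence "wsum V E P (take (m - n) (drop n vs)) \<ge> m - n" by (simp add: wsum_eq)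
  thus ?thesis using bp_split[of n m] a by simp
qed

lemma bp_ge: "n \<le> length vs \<Longrightarrow> n \<le> bp n"
  unfolding bluepos_def wsum_eq by simp

lemma Bc_set: "{n. n < length vs \<and> bp n < e} = {..<Bc e}"
  unfolding Bc_def
proof (rule downward_closed_eq)
  show "finite {n. n < length vs \<and> bp n < e}" by simp
  fix n k assume "n \<in> {n. n < length vs \<and> bp n < e}" "k < n"
  thus "k \<in> {n. n < length vs \<and> bp n < e}" using bp_mono[of k n] by auto
qed

lemma Bc_le_len: "Bc e \<le> length vs"
  unfolding Bc_def by (rule order_trans[OF card_mono[of "{..<length vs}"]]) auto

lemma Bc_iff: "n < length vs \<Longrightarrow> (bp n < e \<longleftrightarrow> n < Bc e)"
  using Bc_set[of e] by (auto simp: set_eq_iff)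

lemma Bc_mono: "e1 \<le> e2 \<Longrightarrow> Bc e1 \<le> Bc e2"
  unfolding Bc_def by (intro card_mono) auto

lemma Bc_bp: "a \<le> length vs \<Longrightarrow> Bc (bp a) = a"
proof -
  assume a: "a \<le> length vs"
  have "{n. n < length vs \<and> bp n < bp a} = {..<a}"
  proof (rule set_eqI, rule iffI)
    fix n assume "n \<in> {n. n < length vs \<and> bp n < bp a}"
    thus "n \<in> {..<a}" using bp_mono[of a n] by (cases "n < a") auto
  next
    fix n assume "n \<in> {..<a}"
    thus "n \<in> {n. n < length vs \<and> bp n < bp a}" using bp_strict[of n a] a by auto
  qed
  thus ?thesis unfolding Bc_def by simp
qed

lemma Bc_le_e: "Bc e \<le> e"
proof -
  have "{n. n < length vs \<and> bp n < e} \<subseteq> {..<e}"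
  proof
    fix n assume "n \<in> {n. n < length vs \<and> bp n < e}"
    thus "n \<in> {..<e}" using bp_ge[of n] by auto
  qed
  hence "card {n. n < length vs \<and> bp n < e} \<le> card {..<e}" by (intro card_mono) auto
  thus ?thesis unfolding Bc_def by simp
qed

lemma Bc_range: "{n. n < length vs \<and> e1 \<le> bp n \<and> bp n < e2} = {..<Bc e2} - {..<Bc e1}"
proof (rule set_eqI)
  fix n
  show "n \<in> {n. n < length vs \<and> e1 \<le> bp n \<and> bp n < e2} \<longleftrightarrow> n \<in> {..<Bc e2} - {..<Bc e1}"
  proof (cases "n < length vs")
    case True
    then show ?thesis using Bc_iff[OF True, of e1] Bc_iff[OF True, of e2] by auto
  next
    case False
    then show ?thesis using Bc_le_len[of e2] by auto
  qed
qed

lemma Bc_diff: "e1 \<le> e2 \<Longrightarrow> Bc e2 - Bc e1 \<le> e2 - e1"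
proof -
  assume e: "e1 \<le> e2"
  let ?X = "{n. n < length vs \<and> e1 \<le> bp n \<and> bp n < e2}"
  have inj: "inj_on bp ?X"
  proof (rule inj_onI)
    fix x y assume x: "x \<in> ?X" and y: "y \<in> ?X" and xy: "bp x = bp y"
    show "x = y"
    proof (rule ccontr)
      assume "x \<noteq> y"
      hence "x < y \<or> y < x" by auto
      thus False using bp_strict[of x y] bp_strict[of y x] x y xy by auto
    qed
  qed
  have sub: "bp ` ?X \<subseteq> {e1..<e2}" by auto
  have "card ?X \<le> card {e1..<e2}"
    by (rule card_inj_on_le[OF inj sub]) simp
  hence "card ({..<Bc e2} - {..<Bc e1}) \<le> e2 - e1" unfolding Bc_range by simp
  moreover have "card ({..<Bc e2} - {..<Bc e1}) = Bc e2 - Bc e1"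
    using Bc_mono[OF e] by (simp add: card_Diff_subset)
  ultimately show ?thesis by simp
qed

lemma blue_in_eq: "i \<le> j \<Longrightarrow> blue_in V E P vs i j = Bc j - Bc i"
proof -
  assume e: "i \<le> j"
  show ?thesis unfolding blue_in_def Bc_range using Bc_mono[OF e] by (simp add: card_Diff_subset)
qed

lemma bp_Bc_ge: "e \<le> wsum V E P vs \<Longrightarrow> e \<le> bp (Bc e)"
proof (cases "Bc e < length vs")
  case True
  then show ?thesis using Bc_iff[of "Bc e" e] by simp
next
  case False
  assume "e \<le> wsum V E P vs"
  hence "Bc e = length vs" using Bc_le_len False by (simp add: le_antisym)
  thus ?thesis using \<open>e \<le> wsum V E P vs\<close> unfolding bluepos_def by simp
qed

lemma bp_Bc_le:
  assumes "\<And>v. v \<in> set vs \<Longrightarrow> outgoing V E P {v} \<le> M"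
  shows "bp (Bc e) \<le> e + M"
proof (cases "Bc e = 0")
  case True
  then show ?thesis unfolding bluepos_def wsum_def by simp
next
  case False
  define a where "a = Bc e - 1"
  have a: "Suc a = Bc e" "a < length vs" using False Bc_le_len[of e] unfolding a_def by auto
  have "bp a < e" using Bc_iff[of a e] a by simp
  moreover have "bp (Suc a) = bp a + 1 + outgoing V E P {vs ! a}"
    unfolding bluepos_def using a(2) by (simp add: take_Suc_conv_app_nth wsum_append wsum_def)
  moreover have "outgoing V E P {vs ! a} \<le> M" using assms a(2) by simp
  ultimately show ?thesis using a(1) by simp
qed


definition OS :: "nat \<Rightarrow> nat" where
  "OS a = (\<Sum>n<a. outgoing V E P {vs ! n})"

lemma bp_Suc: "a < length vs \<Longrightarrow> bp (Suc a) = bp a + 1 + outgoing V E P {vs ! a}"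
  unfolding bluepos_def by (simp add: take_Suc_conv_app_nth wsum_append wsum_def)

lemma bp_OS: "a \<le> length vs \<Longrightarrow> bp a = a + OS a"
proof (induction a)
  case 0
  then show ?case unfolding bluepos_def wsum_def OS_def by simp
next
  case (Suc a)
  then show ?case using bp_Suc[of a] unfolding OS_def by simp
qed

lemma OS_mono: "a \<le> b \<Longrightarrow> OS a \<le> OS b"
  unfolding OS_def by (intro sum_mono2) auto

lemma OS_diff: "a1 \<le> a2 \<Longrightarrow> OS a2 = OS a1 + (\<Sum>n\<in>{a1..<a2}. outgoing V E P {vs ! n})"
  unfolding OS_def lessThan_atLeast0 using sum.atLeastLessThan_concat[of 0 a1 a2 "\<lambda>n. outgoing V E P {vs ! n}"] by simp

lemma take_concat_prefix: "take (length (concat (take m xss))) (concat xss) = concat (take m xss)"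
proof -
  have "concat xss = concat (take m xss) @ concat (drop m xss)"
    using append_take_drop_id[of m xss] concat_append[of "take m xss" "drop m xss"] by simp
  moreover have "take (length (concat (take m xss))) (concat (take m xss) @ concat (drop m xss)) = concat (take m xss)"
    by simp
  ultimately show ?thesis by simp
qed

context
  fixes sg :: "('a list \<times> bool) list"
  assumes hvs: "concat (map fst sg) = vs"
begin

lemma take_ofs: "take (ofs sg m) vs = concat (map fst (take m sg))"
  unfolding ofs_def hvs[symmetric] using take_concat_prefix[of m "map fst sg"] by (simp add: take_map)

lemma ofs_le: "ofs sg m \<le> length vs"
proof -
  have "length (take (ofs sg m) vs) = ofs sg m" using take_ofs[of m] unfolding ofs_def by simp
  thus ?thesis by simp
qed

lemma ofs_Suc: "m < length sg \<Longrightarrow> ofs sg (Suc m) = ofs sg m + length (fst (sg ! m))"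
  unfolding ofs_def by (simp add: take_Suc_conv_app_nth)

lemma ofs_mono: "m \<le> m' \<Longrightarrow> ofs sg m \<le> ofs sg m'"
proof -
  assume "m \<le> m'"
  hence "take m' sg = take m sg @ take (m' - m) (drop m sg)" using take_add[of m "m' - m" sg] by simp
  thus ?thesis unfolding ofs_def by simp
qed

lemma seg_start_eq: "seg_start V E P sg m = bp (ofs sg m)"
  unfolding seg_start_def bluepos_def take_ofs by simp

lemma seg_end_eq: "m < length sg \<Longrightarrow> seg_end V E P sg m = seg_start V E P sg (Suc m)"
  unfolding seg_end_def seg_start_def by (simp add: take_Suc_conv_app_nth wsum_append)

lemma seg_start_mono: "m \<le> m' \<Longrightarrow> seg_start V E P sg m \<le> seg_start V E P sg m'"
  unfolding seg_start_eq by (intro bp_mono ofs_mono)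

lemma seg_xs: "m < length sg \<Longrightarrow> take (length (fst (sg ! m))) (drop (ofs sg m) vs) = fst (sg ! m)"
proof -
  assume m: "m < length sg"
  have "take (ofs sg (Suc m)) vs = concat (map fst (take m sg)) @ fst (sg ! m)"
    unfolding take_ofs using m by (simp add: take_Suc_conv_app_nth)
  hence "take (ofs sg m + length (fst (sg ! m))) vs = take (ofs sg m) vs @ fst (sg ! m)"
    using ofs_Suc[OF m] take_ofs[of m] by simp
  thus ?thesis using take_add[of "ofs sg m" "length (fst (sg ! m))" vs] by simp
qed

definition Qp :: "nat \<Rightarrow> bool" where
  "Qp e \<longleftrightarrow> (\<forall>m < length sg. snd (sg ! m) \<longrightarrow>
      \<not> (seg_start V E P sg m < e \<and> e < seg_end V E P sg m))"

lemma Qp_start: "Qp (seg_start V E P sg k)"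
  unfolding Qp_def
proof (intro allI impI notI)
  fix m assume m: "m < length sg" "snd (sg ! m)"
    "seg_start V E P sg m < seg_start V E P sg k \<and> seg_start V E P sg k < seg_end V E P sg m"
  show False
  proof (cases "k \<le> m")
    case True
    then show False using seg_start_mono[OF True] m(3) by simp
  next
    case False
    hence "Suc m \<le> k" by simp
    then show False using seg_start_mono[of "Suc m" k] seg_end_eq[OF m(1)] m(3) by simp
  qed
qed

lemma moved_Qp: "moved_end V E P sg e e' \<Longrightarrow> Qp e'"
proof -
  assume mv: "moved_end V E P sg e e'"
  show ?thesis
  proof (cases "\<exists>m < length sg. snd (sg ! m) \<and> seg_start V E P sg m < e \<and> e < seg_end V E P sg m")
    case True
    then obtain m where m: "m < length sg" "e' = seg_start V E P sg m \<or> e' = seg_end V E P sg m"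
      using mv unfolding moved_end_def by auto
    then show ?thesis using Qp_start[of m] Qp_start[of "Suc m"] seg_end_eq[OF m(1)] by auto
  next
    case False
    hence "e' = e" using mv unfolding moved_end_def by auto
    then show ?thesis using False unfolding Qp_def by auto
  qed
qed

lemma Qp_NC: "Qp e \<Longrightarrow> NC (Bc e) sg"
  unfolding NC_def
proof (intro allI impI notI)
  fix m assume Q: "Qp e" and m: "m < length sg" "snd (sg ! m)"
    and c: "ofs sg m < Bc e \<and> Bc e < ofs sg m + length (fst (sg ! m))"
  have le: "ofs sg m + length (fst (sg ! m)) \<le> length vs" using ofs_Suc[OF m(1)] ofs_le[of "Suc m"] by simp
  have "bp (ofs sg m) < e" using Bc_iff[of "ofs sg m" e] c le by simp
  moreover have "e \<le> bp (Bc e)" using Bc_iff[of "Bc e" e] c le by simp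
  moreover have "bp (Bc e) < bp (ofs sg m + length (fst (sg ! m)))" using bp_strict c le by simp
  moreover have "seg_end V E P sg m = bp (ofs sg m + length (fst (sg ! m)))"
    using seg_end_eq[OF m(1)] seg_start_eq ofs_Suc[OF m(1)] by simp
  ultimately have "seg_start V E P sg m < e \<and> e < seg_end V E P sg m"
    unfolding seg_start_eq by linarith
  thus False using Q m unfolding Qp_def by blast
qed

lemma moved_cases:
  assumes "moved_end V E P sg e e'"
  shows "e' = e \<or> (\<exists>m < length sg. snd (sg ! m) \<and>
     bp (ofs sg m) \<le> e \<and> e \<le> bp (ofs sg m + length (fst (sg ! m))) \<and>
     bp (ofs sg m) \<le> e' \<and> e' \<le> bp (ofs sg m + length (fst (sg ! m))))"
proof (cases "\<exists>m < length sg. snd (sg ! m) \<and> seg_start V E P sg m < e \<and> e < seg_end V E P sg m")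
  case True
  then obtain m where m: "m < length sg" "snd (sg ! m)" "seg_start V E P sg m < e" "e < seg_end V E P sg m"
      "e' = seg_start V E P sg m \<or> e' = seg_end V E P sg m"
    using assms unfolding moved_end_def by auto
  have se: "seg_end V E P sg m = bp (ofs sg m + length (fst (sg ! m)))"
    using seg_end_eq[OF m(1)] seg_start_eq ofs_Suc[OF m(1)] by simp
  show ?thesis using m se unfolding seg_start_eq by auto
next
  case False
  then show ?thesis using assms unfolding moved_end_def by auto
qed

end


lemma OS_seg:
  assumes "s + l \<le> length vs"
  shows "OS (s + l) = OS s + sum_list (map (\<lambda>v. outgoing V E P {v}) (take l (drop s vs)))"
proof -
  let ?f = "\<lambda>v. outgoing V E P {v}"
  have "sum_list (map ?f (take l (drop s vs))) = (\<Sum>i = 0..<l. ?f (vs ! (s + i)))"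
    using assms by (simp add: sum.list_conv_set_nth)
  also have "\<dots> = (\<Sum>n\<in>{s..<s + l}. ?f (vs ! n))"
    using sum.shift_bounds_nat_ivl[of "\<lambda>n. ?f (vs ! n)" 0 s l] by (simp add: add.commute)
  finally show ?thesis using OS_diff[of s "s + l"] by simp
qed

lemma move_bounds:
  assumes sl: "s + l \<le> length vs" and e: "bp s \<le> e" "e \<le> bp (s + l)"
    and e': "bp s \<le> e'" "e' \<le> bp (s + l)"
  shows "\<bar>real (Bc e) - real (Bc e')\<bar> \<le> real l \<and>
    \<bar>(real e - real (Bc e)) - (real e' - real (Bc e'))\<bar> \<le> real (OS (s + l)) - real (OS s)"
proof -
  have b1: "Bc (bp s) = s" using Bc_bp sl by simp
  have b2: "Bc (bp (s + l)) = s + l" using Bc_bp sl by simp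
  have r: "s \<le> Bc x \<and> Bc x \<le> s + l \<and> real (OS s) \<le> real x - real (Bc x) \<and> real x - real (Bc x) \<le> real (OS (s + l))"
    if x: "bp s \<le> x" "x \<le> bp (s + l)" for x
  proof -
    have m1: "s \<le> Bc x" using Bc_mono[OF x(1)] b1 by simp
    have m2: "Bc x \<le> s + l" using Bc_mono[OF x(2)] b2 by simp
    have d1: "Bc x - s \<le> x - bp s" using Bc_diff[OF x(1)] b1 by simp
    have d2: "s + l - Bc x \<le> bp (s + l) - x" using Bc_diff[OF x(2)] b2 by simp
    have o1: "bp s = s + OS s" using bp_OS sl by simp
    have o2: "bp (s + l) = s + l + OS (s + l)" using bp_OS sl by simp
    show ?thesis using m1 m2 d1 d2 o1 o2 x by linarith
  qed
  have A: "\<bar>real (Bc e) - real (Bc e')\<bar> \<le> real l" using r[OF e] r[OF e'] by linarith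
  have B: "\<bar>(real e - real (Bc e)) - (real e' - real (Bc e'))\<bar> \<le> real (OS (s + l)) - real (OS s)"
    using r[OF e] r[OF e'] by linarith
  show ?thesis using A B by simp
qed

lemma bp_len: "bp (length vs) = wsum V E P vs"
  unfolding bluepos_def by simp

context
  fixes sg :: "('a list \<times> bool) list"
  assumes hvs: "concat (map fst sg) = vs"
begin

lemma endpoint:
  assumes mv: "moved_end V E P sg e e'" and ew: "e \<le> wsum V E P vs"
    and dist: "distinct vs" and finV: "finite V" and U0: "0 \<le> U" and H0: "0 \<le> Hh"
    and segb: "\<And>xs. (xs, True) \<in> set sg \<Longrightarrow> real (length xs) \<le> U \<and> real (outgoing V E P (set xs)) \<le> Hh"
  shows "\<bar>real (Bc e) - real (Bc e')\<bar> \<le> U \<and>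
    \<bar>(real e - real (Bc e)) - (real e' - real (Bc e'))\<bar> \<le> Hh \<and> e' \<le> wsum V E P vs"
proof -
  from moved_cases[OF hvs mv] show ?thesis
  proof
    assume "e' = e"
    thus ?thesis using ew U0 H0 by simp
  next
    assume "\<exists>m < length sg. snd (sg ! m) \<and>
     bp (ofs sg m) \<le> e \<and> e \<le> bp (ofs sg m + length (fst (sg ! m))) \<and>
     bp (ofs sg m) \<le> e' \<and> e' \<le> bp (ofs sg m + length (fst (sg ! m)))"
    then obtain m where m: "m < length sg" "snd (sg ! m)"
      "bp (ofs sg m) \<le> e" "e \<le> bp (ofs sg m + length (fst (sg ! m)))"
      "bp (ofs sg m) \<le> e'" "e' \<le> bp (ofs sg m + length (fst (sg ! m)))" by blast
    define xs where "xs = fst (sg ! m)"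
    define s where "s = ofs sg m"
    have sl: "s + length xs \<le> length vs" unfolding s_def xs_def
      using ofs_Suc[OF hvs m(1)] ofs_le[OF hvs, of "Suc m"] by simp
    have xin: "(xs, True) \<in> set sg" using m(1,2) nth_mem[OF m(1)] unfolding xs_def
      by (metis prod.collapse)
    have txs: "take (length xs) (drop s vs) = xs" unfolding xs_def s_def using seg_xs[OF hvs m(1)] .
    have dxs: "distinct xs" using dist txs by (metis distinct_drop distinct_take)
    have mb: "\<bar>real (Bc e) - real (Bc e')\<bar> \<le> real (length xs) \<and>
      \<bar>(real e - real (Bc e)) - (real e' - real (Bc e'))\<bar> \<le> real (OS (s + length xs)) - real (OS s)"
      using move_bounds[OF sl] m(3-6) unfolding s_def xs_def by simp
    have "OS (s + length xs) = OS s + sum_list (map (\<lambda>v. outgoing V E P {v}) xs)"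
      using OS_seg[OF sl] txs by simp
    also have "sum_list (map (\<lambda>v. outgoing V E P {v}) xs) = outgoing V E P (set xs)"
      using sum_list_distinct_conv_sum_set[OF dxs] outgoing_sum[OF finite_set finV] by simp
    finally have "real (OS (s + length xs)) - real (OS s) = real (outgoing V E P (set xs))" by simp
    moreover have "e' \<le> wsum V E P vs"
      using m(6) bp_mono[OF sl] bp_len unfolding s_def xs_def by simp
    ultimately show ?thesis using mb segb[OF xin] by linarith
  qed
qed

lemma Px_eq:
  "{vs ! n | n. n < length vs \<and> i' \<le> bp n \<and> bp n < j'} = (!) vs ` {Bc i'..<Bc j'}"
proof (rule set_eqI, rule iffI)
  fix x assume "x \<in> {vs ! n | n. n < length vs \<and> i' \<le> bp n \<and> bp n < j'}"
  then obtain n where n: "x = vs ! n" "n < length vs" "i' \<le> bp n" "bp n < j'" by blast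
  have "Bc i' \<le> n" using Bc_iff[OF n(2), of i'] n(3) by simp
  moreover have "n < Bc j'" using Bc_iff[OF n(2), of j'] n(4) by simp
  ultimately show "x \<in> (!) vs ` {Bc i'..<Bc j'}" using n(1) by auto
next
  fix x assume "x \<in> (!) vs ` {Bc i'..<Bc j'}"
  then obtain n where n: "x = vs ! n" "Bc i' \<le> n" "n < Bc j'" by auto
  have nl: "n < length vs" using n(3) Bc_le_len[of j'] by simp
  have "i' \<le> bp n" using Bc_iff[OF nl, of i'] n(2) by simp
  moreover have "bp n < j'" using Bc_iff[OF nl, of j'] n(3) by simp
  ultimately show "x \<in> {vs ! n | n. n < length vs \<and> i' \<le> bp n \<and> bp n < j'}" using n(1) nl by blast
qed

end

end




lemma nth_in_drop: "a \<le> k \<Longrightarrow> k < length xs \<Longrightarrow> xs ! k \<in> set (drop a xs)"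
proof -
  assume a: "a \<le> k" "k < length xs"
  have "drop a xs ! (k - a) = xs ! k" using a by simp
  moreover have "k - a < length (drop a xs)" using a by simp
  ultimately show ?thesis by (metis nth_mem)
qed

lemma nth_in_take: "k < a \<Longrightarrow> k < length xs \<Longrightarrow> xs ! k \<in> set (take a xs)"
proof -
  assume a: "k < a" "k < length xs"
  have "take a xs ! k = xs ! k" using a by simp
  moreover have "k < length (take a xs)" using a by simp
  ultimately show ?thesis by (metis nth_mem)
qed

lemma log_ge_aux: "real g \<ge> 2 powr y \<Longrightarrow> log 2 (real g) \<ge> y"
proof -
  assume a: "real g \<ge> 2 powr y"
  have "real g > 0" using a by (smt (verit) powr_gt_zero)
  thus ?thesis using le_log_iff[of 2 "real g" y] a by simp
qed

lemma pow_depth: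
  assumes b0: "0 < beta" and b1: "beta < 1" and L: "1 \<le> L"
  shows "L ^ 3 \<le> (1 / beta) ^ nat \<lceil>3 * log (1 / beta) L\<rceil>"
proof -
  define B where "B = 1 / beta"
  have B1: "1 < B" unfolding B_def using b0 b1 by simp
  define x where "x = log B L"
  have x0: "0 \<le> x" unfolding x_def using B1 L by simp
  have "3 * x \<le> real (nat \<lceil>3 * x\<rceil>)" by linarith
  hence "B powr (3 * x) \<le> B powr real (nat \<lceil>3 * x\<rceil>)" using B1 by (intro powr_mono) auto
  also have "\<dots> = B ^ nat \<lceil>3 * x\<rceil>" using B1 by (simp add: powr_realpow)
  finally have "B powr (3 * x) \<le> B ^ nat \<lceil>3 * x\<rceil>" .
  moreover have "B powr (3 * x) = (B powr x) powr 3" by (simp add: powr_powr mult.commute)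
  moreover have "B powr x = L" unfolding x_def using B1 L by simp
  moreover have "L powr 3 = L ^ 3" using L powr_realpow[of L 3] by simp
  ultimately show ?thesis unfolding B_def x_def by simp
qed


lemma half_aux: "(z::real) \<le> 2 + 4 * m + 8 * p + z / 2 \<Longrightarrow> z \<le> 4 + 8 * m + 16 * p"
  by linarith

lemma core:
  fixes V :: "'a set" and E :: "'a \<Rightarrow> 'a \<Rightarrow> bool"
  assumes finV: "finite V" and Esym: "\<And>u v. E u v = E v u" and PV: "P \<subseteq> V"
    and deg: "\<And>v. outgoing V E P {v} \<le> M"
    and b0: "0 < beta" and b1: "beta < 1" and al: "0 < 1 - 1 / d"
    and K: "K = max c 0 / (1 - beta powr (1 - 1 / d))"
    and rbp: "rbp_output V E beta c d P Px"
  shows "real (ecount E Px (P - Px)) \<le> 2 * K * real (gsize P E) powr (1 - 1 / d) \<and>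
    \<bar>real (card Px) - real (card (P - Px))\<bar> \<le> 6 + 4 * real (gsize P E) / (log 2 (real (gsize V E))) ^ 3 \<and>
    \<bar>real (outgoing V E P Px) - real (outgoing V E P (P - Px))\<bar>
      \<le> max 64 (4 + 8 * real M) + 16 * real (outgoing V E P (P - Px)) / (log 2 (real (gsize V E))) ^ 2"
proof -
  obtain t i j i' j' where rt: "relax_tree V E beta c d P t" and
    lt: "let vs = vlist t; sg = segs t; B = length vs; R = outgoing V E P P;
             b = blue_in V E P vs i j; r = (j - i) - b in
          i \<le> j \<and> j \<le> wsum V E P vs \<and>
          \<bar>2 * real b - real B\<bar> \<le> 2 \<and> \<bar>2 * real r - real R\<bar> \<le> 2 \<and>
          moved_end V E P sg i i' \<and> moved_end V E P sg j j' \<and>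
          Px = {vs ! n | n. n < length vs \<and> i' \<le> bluepos V E P vs n \<and> bluepos V E P vs n < j'}"
    using rbp unfolding rbp_output_def by blast
  define vs where "vs = vlist t"
  define sg where "sg = segs t"
  define n where "n = length vs"
  define R where "R = outgoing V E P P"
  define b where "b = blue_in V E P vs i j"
  define r where "r = (j - i) - b"
  have ij: "i \<le> j" and jw: "j \<le> wsum V E P vs" and hb: "\<bar>2 * real b - real n\<bar> \<le> 2"
    and hr: "\<bar>2 * real r - real R\<bar> \<le> 2" and mi: "moved_end V E P sg i i'"
    and mj: "moved_end V E P sg j j'"
    and Pxd: "Px = {vs ! n | n. n < length vs \<and> i' \<le> bluepos V E P vs n \<and> bluepos V E P vs n < j'}"
    using lt unfolding vs_def[symmetric] sg_def[symmetric] n_def[symmetric] R_def[symmetric]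
      b_def[symmetric] r_def[symmetric] Let_def by auto
  have up: "upper_ok (split_ok E beta c d) (heavy V E P) (upper_depth beta (gsize V E)) t"
    and dist: "distinct vs" and setP: "set vs = P"
    using rt unfolding relax_tree_def vs_def by auto
  have hvs: "concat (map fst sg) = vs" unfolding sg_def vs_def by (rule concat_segs)
  have finP: "finite P" using setP by auto
  have nP: "n = card P" unfolding n_def using dist setP distinct_card by metis
  define a1 where "a1 = Bc V E P vs i'"
  define a2 where "a2 = Bc V E P vs j'"
  have a2l: "a2 \<le> n" unfolding a2_def n_def by (rule Bc_le_len)
  have Pxe: "Px = (!) vs ` {a1..<a2}" unfolding Pxd a1_def a2_def using Px_eq[OF hvs] by simp
  have nPE: "n \<le> gsize P E" unfolding nP gsize_def by simp
  have sub1: "Px \<subseteq> set (drop a1 vs) \<inter> set (take a2 vs)"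
  proof
    fix x assume "x \<in> Px"
    then obtain k where k: "x = vs ! k" "a1 \<le> k" "k < a2" unfolding Pxe by auto
    have "k < length vs" using k a2l unfolding n_def by simp
    thus "x \<in> set (drop a1 vs) \<inter> set (take a2 vs)" using k nth_in_drop nth_in_take by blast
  qed
  have sub2: "P - Px \<subseteq> set (take a1 vs) \<union> set (drop a2 vs)"
  proof
    fix y assume y: "y \<in> P - Px"
    then obtain k where k: "k < length vs" "y = vs ! k" using setP by (auto simp: in_set_conv_nth)
    have "\<not> (a1 \<le> k \<and> k < a2)" using y k unfolding Pxe by auto
    hence "k < a1 \<or> a2 \<le> k" by auto
    thus "y \<in> set (take a1 vs) \<union> set (drop a2 vs)" using k nth_in_drop nth_in_take by blast
  qed
  have finPx: "finite Px" unfolding Pxe by simp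
  have ec: "ecount E Px (P - Px) \<le> ecount E (set (take a1 vs)) (set (drop a1 vs)) + ecount E (set (take a2 vs)) (set (drop a2 vs))"
  proof -
    have "ecount E Px (P - Px) \<le> ecount E Px (set (take a1 vs) \<union> set (drop a2 vs))"
      using sub2 finPx by (intro ecount_mono) auto
    also have "\<dots> \<le> ecount E Px (set (take a1 vs)) + ecount E Px (set (drop a2 vs))"
      using finPx by (intro ecount_Un2) auto
    also have "ecount E Px (set (take a1 vs)) \<le> ecount E (set (drop a1 vs)) (set (take a1 vs))"
      using sub1 by (intro ecount_mono) auto
    also have "ecount E Px (set (drop a2 vs)) \<le> ecount E (set (take a2 vs)) (set (drop a2 vs))"
      using sub1 by (intro ecount_mono) auto
    finally show ?thesis using ecount_sym[of E "set (drop a1 vs)" "set (take a1 vs)"] Esym by simp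
  qed
  have als: "allsplit (split_ok E beta c d) t" using upper_allsplit[OF up] .
  have dt: "distinct (vlist t)" using dist unfolding vs_def .
  have nc1: "nocut a1 t" unfolding a1_def
    using nc_nocut[of _ t] Qp_NC[OF hvs moved_Qp[OF hvs mi]] unfolding sg_def by blast
  have nc2: "nocut a2 t" unfolding a2_def
    using nc_nocut[of _ t] Qp_NC[OF hvs moved_Qp[OF hvs mj]] unfolding sg_def by blast
  have pc1: "real (ecount E (set (take a1 vs)) (set (drop a1 vs))) \<le> K * real n powr (1 - 1 / d)"
    using prefix_cut[OF als dt nc1 b0 b1 al K] unfolding vs_def n_def .
  have pc2: "real (ecount E (set (take a2 vs)) (set (drop a2 vs))) \<le> K * real n powr (1 - 1 / d)"
    using prefix_cut[OF als dt nc2 b0 b1 al K] unfolding vs_def n_def .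
  have "beta powr (1 - 1 / d) < 1" using b0 b1 al by (simp add: powr01_less_one)
  hence K0: "0 \<le> K" unfolding K by simp
  have "real n powr (1 - 1 / d) \<le> real (gsize P E) powr (1 - 1 / d)"
    using nPE al by (intro powr_mono2) auto
  hence "K * real n powr (1 - 1 / d) \<le> K * real (gsize P E) powr (1 - 1 / d)"
    using K0 by (rule mult_left_mono)
  hence claim1: "real (ecount E Px (P - Px)) \<le> 2 * K * real (gsize P E) powr (1 - 1 / d)"
    using ec pc1 pc2 by linarith
  define L where "L = log 2 (real (gsize V E))"
  have cV: "card V \<le> gsize V E" unfolding gsize_def by simp
  have nV: "n \<le> card V" unfolding nP using PV finV by (rule card_mono[rotated])
  have L0: "0 \<le> L"
  proof (cases "gsize V E = 0")
    case True
    then show ?thesis unfolding L_def by (simp add: log_def)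
  next
    case False
    then show ?thesis unfolding L_def by simp
  qed
  have Lsmall: "gsize V E \<le> 1" if "L < 1"
  proof (rule ccontr)
    assume "\<not> gsize V E \<le> 1"
    hence "real (gsize V E) \<ge> 2 powr 1" by simp
    hence "L \<ge> 1" unfolding L_def by (rule log_ge_aux)
    thus False using that by simp
  qed
  define U where "U = 1 + real n / L ^ 3"
  define Hh where "Hh = real R / L ^ 2"
  have U0: "0 \<le> U" unfolding U_def using L0 by simp
  have H0: "0 \<le> Hh" unfolding Hh_def by simp
  have segb: "real (length xs) \<le> U \<and> real (outgoing V E P (set xs)) \<le> Hh" if xin: "(xs, True) \<in> set sg" for xs
  proof
    have "\<not> heavy V E P (set xs)" using upper_segs[OF up] xin unfolding sg_def by blast
    thus "real (outgoing V E P (set xs)) \<le> Hh" unfolding heavy_def Hh_def R_def L_def by simp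
  next
    define D where "D = upper_depth beta (gsize V E)"
    have Deq: "D = nat \<lceil>3 * log (1 / beta) L\<rceil>" unfolding D_def upper_depth_def L_def ..
    have ul: "length xs = 1 \<or> real (length xs) * (1 / beta) ^ D \<le> real n"
      using upper_len[OF up dt b0, of xs] xin unfolding sg_def D_def n_def vs_def by simp
    have B1: "1 \<le> (1 / beta) ^ D" using b0 b1 by (intro one_le_power) simp
    have nU: "real n / L ^ 3 \<ge> 0" using L0 by simp
    show "real (length xs) \<le> U"
    proof (cases "length xs = 1")
      case True
      then show ?thesis unfolding U_def using nU by simp
    next
      case False
      hence ul': "real (length xs) * (1 / beta) ^ D \<le> real n" using ul by simp
      have "real (length xs) * 1 \<le> real (length xs) * (1 / beta) ^ D"
        using B1 by (intro mult_left_mono) auto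
      hence ln: "real (length xs) \<le> real n" using ul' by simp
      show ?thesis
      proof (cases "1 \<le> L")
        case True
        have "L ^ 3 \<le> (1 / beta) ^ D" unfolding Deq using pow_depth[OF b0 b1 True] .
        hence "real (length xs) * L ^ 3 \<le> real (length xs) * (1 / beta) ^ D"
          by (intro mult_left_mono) auto
        hence "real (length xs) * L ^ 3 \<le> real n" using ul' by simp
        moreover have "L ^ 3 > 0" using True by simp
        ultimately have "real (length xs) \<le> real n / L ^ 3" by (simp add: pos_le_divide_eq)
        then show ?thesis unfolding U_def by simp
      next
        case False
        hence "n \<le> 1" using Lsmall nV cV by simp
        then show ?thesis using ln nU unfolding U_def by simp
      qed
    qed
  qed
  have iw: "i \<le> wsum V E P vs" using ij jw by simp
  have epi: "\<bar>real (Bc V E P vs i) - real a1\<bar> \<le> U \<and>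
    \<bar>(real i - real (Bc V E P vs i)) - (real i' - real a1)\<bar> \<le> Hh \<and> i' \<le> wsum V E P vs"
    unfolding a1_def using endpoint[OF hvs mi iw dist finV U0 H0 segb] .
  have epj: "\<bar>real (Bc V E P vs j) - real a2\<bar> \<le> U \<and>
    \<bar>(real j - real (Bc V E P vs j)) - (real j' - real a2)\<bar> \<le> Hh \<and> j' \<le> wsum V E P vs"
    unfolding a2_def using endpoint[OF hvs mj jw dist finV U0 H0 segb] .
  define bi where "bi = Bc V E P vs i"
  define bj where "bj = Bc V E P vs j"
  have bij: "bi \<le> bj" unfolding bi_def bj_def using Bc_mono[OF ij] .
  have beq: "b = bj - bi" unfolding b_def bi_def bj_def using blue_in_eq[OF ij] .
  have bdiff: "bj - bi \<le> j - i" unfolding bi_def bj_def using Bc_diff[OF ij] .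
  have req: "real r = (real j - real bj) - (real i - real bi)"
    unfolding r_def beq using bdiff bij ij by (simp add: of_nat_diff)
  have hb': "\<bar>2 * real bj - 2 * real bi - real n\<bar> \<le> 2" using hb beq bij by (simp add: of_nat_diff)
  have inj: "inj_on ((!) vs) {a1..<a2}" using dist a2l unfolding n_def by (intro inj_on_nth) auto
  have cPx: "card Px = a2 - a1" unfolding Pxe using card_image[OF inj] by simp
  have oPx0: "outgoing V E P Px = (\<Sum>k\<in>{a1..<a2}. outgoing V E P {vs ! k})"
    using outgoing_sum[OF finPx finV] sum.reindex[OF inj, of "\<lambda>v. outgoing V E P {v}"] unfolding Pxe by simp
  have oPx: "real (outgoing V E P Px) = (if a1 \<le> a2 then real (OS V E P vs a2) - real (OS V E P vs a1) else 0)"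
  proof (cases "a1 \<le> a2")
    case True
    then show ?thesis using oPx0 OS_diff[OF True, of V E P vs] by simp
  next
    case False
    then show ?thesis using oPx0 by simp
  qed
  have PxP: "Px \<subseteq> P" using sub1 setP by (auto dest: in_set_dropD)
  have cPxn: "card Px \<le> n" unfolding nP using PxP finP by (rule card_mono[rotated])
  have cPy: "real (card (P - Px)) = real n - real (card Px)"
    unfolding nP using card_Diff_subset[OF finPx PxP] card_mono[OF finP PxP] by (simp add: of_nat_diff)
  have oP: "R = outgoing V E P Px + outgoing V E P (P - Px)"
  proof -
    have "P = Px \<union> (P - Px)" using PxP by auto
    hence "R = outgoing V E P (Px \<union> (P - Px))" unfolding R_def by simp
    also have "\<dots> = outgoing V E P Px + outgoing V E P (P - Px)"
      unfolding outgoing_def using finPx finP finV by (intro ecount_Un1_disj) auto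
    finally show ?thesis .
  qed
  have ROS: "R = OS V E P vs n"
  proof -
    have "R = (\<Sum>v\<in>P. outgoing V E P {v})" unfolding R_def using outgoing_sum[OF finP finV] .
    also have "\<dots> = sum_list (map (\<lambda>v. outgoing V E P {v}) vs)"
      using sum_list_distinct_conv_sum_set[OF dist, of "\<lambda>v. outgoing V E P {v}"] setP by simp
    also have "\<dots> = OS V E P vs n" unfolding OS_def n_def
      by (simp add: sum.list_conv_set_nth lessThan_atLeast0)
    finally show ?thesis .
  qed
  have degv: "\<And>v. v \<in> set vs \<Longrightarrow> outgoing V E P {v} \<le> M" using deg by simp
  have rel: "real e - real (Bc V E P vs e) \<le> real (OS V E P vs (Bc V E P vs e)) \<and>
      real (OS V E P vs (Bc V E P vs e)) \<le> real e - real (Bc V E P vs e) + real M"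
    if ew: "e \<le> wsum V E P vs" for e
  proof -
    have g1: "e \<le> bluepos V E P vs (Bc V E P vs e)" using bp_Bc_ge[OF ew] .
    have g2: "bluepos V E P vs (Bc V E P vs e) \<le> e + M" using bp_Bc_le[OF degv] .
    have g3: "bluepos V E P vs (Bc V E P vs e) = Bc V E P vs e + OS V E P vs (Bc V E P vs e)"
      using bp_OS[OF Bc_le_len] .
    show ?thesis using g1 g2 g3 by linarith
  qed
  have rel1: "real i' - real a1 \<le> real (OS V E P vs a1) \<and> real (OS V E P vs a1) \<le> real i' - real a1 + real M"
    unfolding a1_def using rel epi by blast
  have rel2: "real j' - real a2 \<le> real (OS V E P vs a2) \<and> real (OS V E P vs a2) \<le> real j' - real a2 + real M"
    unfolding a2_def using rel epj by blast
  have OSm: "a2 < a1 \<Longrightarrow> OS V E P vs a2 \<le> OS V E P vs a1" by (intro OS_mono) simp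
  have epi': "\<bar>real bi - real a1\<bar> \<le> U" "\<bar>(real i - real bi) - (real i' - real a1)\<bar> \<le> Hh"
    using epi unfolding bi_def by auto
  have epj': "\<bar>real bj - real a2\<bar> \<le> U" "\<bar>(real j - real bj) - (real j' - real a2)\<bar> \<le> Hh"
    using epj unfolding bj_def by auto
  have c2a: "\<bar>real (card Px) - real (card (P - Px))\<bar> \<le> 2 + 4 * U"
  proof (cases "a1 \<le> a2")
    case True
    hence "real (card Px) = real a2 - real a1" unfolding cPx by (simp add: of_nat_diff)
    then show ?thesis unfolding abs_le_iff using cPy hb'[unfolded abs_le_iff] epi'(1)[unfolded abs_le_iff] epj'(1)[unfolded abs_le_iff] by (elim conjE, intro conjI) linarith+
  next
    case False
    hence "card Px = 0" unfolding cPx by simp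
    then show ?thesis unfolding abs_le_iff using cPy hb'[unfolded abs_le_iff] epi'(1)[unfolded abs_le_iff] epj'(1)[unfolded abs_le_iff] False by (elim conjE, intro conjI) linarith+
  qed
  have "real n / L ^ 3 \<le> real (gsize P E) / L ^ 3" using nPE L0 by (intro divide_right_mono) auto
  hence claim2: "\<bar>real (card Px) - real (card (P - Px))\<bar> \<le> 6 + 4 * real (gsize P E) / L ^ 3"
    using c2a unfolding U_def by simp
  define Xo where "Xo = real (outgoing V E P Px)"
  define Y where "Y = real (outgoing V E P (P - Px))"
  have RXY: "real R = Xo + Y" unfolding Xo_def Y_def using oP by simp
  have X0: "0 \<le> Xo" and Y0: "0 \<le> Y" unfolding Xo_def Y_def by auto
  have r0: "0 \<le> real r" by simp
  have c3a: "\<bar>Xo - Y\<bar> \<le> 2 + 4 * real M + 4 * Hh"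
  proof (cases "a1 \<le> a2")
    case True
    hence "Xo = real (OS V E P vs a2) - real (OS V E P vs a1)" unfolding Xo_def oPx by simp
    then show ?thesis unfolding abs_le_iff using RXY hr[unfolded abs_le_iff] req rel1 rel2 epi'(2)[unfolded abs_le_iff] epj'(2)[unfolded abs_le_iff] by (elim conjE, intro conjI) linarith+
  next
    case False
    hence "Xo = 0" unfolding Xo_def oPx by simp
    moreover have "real (OS V E P vs a2) \<le> real (OS V E P vs a1)" using OSm False by simp
    ultimately show ?thesis unfolding abs_le_iff using RXY hr[unfolded abs_le_iff] req rel1 rel2 epi'(2)[unfolded abs_le_iff] epj'(2)[unfolded abs_le_iff] r0 by (elim conjE, intro conjI) linarith+
  qed
  have claim3: "\<bar>Xo - Y\<bar> \<le> max 64 (4 + 8 * real M) + 16 * Y / L ^ 2"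
  proof (cases "8 \<le> L ^ 2")
    case True
    define w where "w = 1 / L ^ 2"
    have w0: "0 \<le> w" and w8: "w \<le> 1 / 8" unfolding w_def using True by (auto simp: divide_simps)
    have Hw: "Hh = real R * w" unfolding Hh_def w_def by simp
    have Yw: "16 * Y / L ^ 2 = 16 * (Y * w)" unfolding w_def by simp
    have "real R * w \<le> (2 * Y + \<bar>Xo - Y\<bar>) * w" using RXY w0 by (intro mult_right_mono) auto
    moreover have "\<bar>Xo - Y\<bar> * w \<le> \<bar>Xo - Y\<bar> * (1 / 8)" using w8 by (intro mult_left_mono) auto
    ultimately have "\<bar>Xo - Y\<bar> \<le> 2 + 4 * real M + 8 * (Y * w) + \<bar>Xo - Y\<bar> / 2"
      using c3a Hw by (simp add: algebra_simps)
    hence "\<bar>Xo - Y\<bar> \<le> 4 + 8 * real M + 16 * (Y * w)" by (rule half_aux)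
    then show ?thesis unfolding Yw by linarith
  next
    case False
    have "L < 3"
    proof (rule ccontr)
      assume "\<not> L < 3"
      hence "9 \<le> L ^ 2" using power_mono[of 3 L 2] by simp
      thus False using False by simp
    qed
    have g8: "gsize V E < 8"
    proof (rule ccontr)
      assume "\<not> gsize V E < 8"
      hence "real (gsize V E) \<ge> 2 powr 3" by simp
      hence "L \<ge> 3" unfolding L_def by (rule log_ge_aux)
      thus False using \<open>L < 3\<close> by simp
    qed
    have "R \<le> card (P \<times> (V - P))" unfolding R_def outgoing_def ecount_def
      using finP finV by (intro card_mono) auto
    also have "\<dots> \<le> card V * card V" unfolding card_cartesian_product
      using nV nP card_mono[OF finV, of "V - P"] by (intro mult_le_mono) auto
    also have "\<dots> \<le> 7 * 7" using cV g8 by (intro mult_le_mono) auto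
    finally have "real R \<le> 49" by simp
    moreover have "\<bar>Xo - Y\<bar> \<le> real R" using RXY X0 Y0 by linarith
    moreover have "0 \<le> 16 * Y / L ^ 2" using Y0 by simp
    ultimately show ?thesis by linarith
  qed
  show ?thesis using claim1 claim2 claim3 unfolding Xo_def Y_def L_def by simp
qed



theorem lemma6:
  fixes rho eps c :: real
  assumes "CARD('d::finite) \<ge> 2" and "0 < eps" and "eps < 1"
  shows "\<exists>C::real. \<forall>(S :: (real ^ 'd) set set) P Px.
     well_shaped_mesh rho S \<and> P \<subseteq> mesh_vertices S \<and>
     rbp_output (mesh_vertices S) (mesh_edge S)
       ((real CARD('d) + 1 + eps) / (real CARD('d) + 2)) c (real CARD('d)) P Px
     \<longrightarrow>
       (let V = mesh_vertices S; E = mesh_edge S; Py = P - Px;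
            L = log 2 (real (gsize V E)) in
        real (ecount E Px Py) \<le> C * real (gsize P E) powr (1 - 1 / real CARD('d)) \<and>
        \<bar>real (card Px) - real (card Py)\<bar> \<le> C * real (gsize P E) / L ^ 3 + C \<and>
        \<bar>real (outgoing V E P Px) - real (outgoing V E P Py)\<bar>
          \<le> C * real (outgoing V E P Py) / L ^ 2 + C)"
proof -
  define dd where "dd = real CARD('d)"
  define beta where "beta = (dd + 1 + eps) / (dd + 2)"
  have d2: "2 \<le> dd" unfolding dd_def using assms(1) by simp
  have b0: "0 < beta" unfolding beta_def using d2 assms(2) by simp
  have b1: "beta < 1" unfolding beta_def using d2 assms(3) by simp
  have al: "0 < 1 - 1 / dd" using d2 by simp
  define K where "K = max c 0 / (1 - beta powr (1 - 1 / dd))"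
  have "beta powr (1 - 1 / dd) < 1" using b0 b1 al by (simp add: powr01_less_one)
  hence K0: "0 \<le> K" unfolding K_def by simp
  define M where "M = nat \<lceil>(1 + 2 * \<bar>rho\<bar>) ^ CARD('d)\<rceil> * (CARD('d) + 1)"
  define C where "C = 2 * K + 8 * real M + 100"
  show ?thesis
  proof (rule exI[of _ C], intro allI impI)
    fix S :: "(real ^ 'd) set set" and P Px
    assume H: "well_shaped_mesh rho S \<and> P \<subseteq> mesh_vertices S \<and>
     rbp_output (mesh_vertices S) (mesh_edge S)
       ((real CARD('d) + 1 + eps) / (real CARD('d) + 2)) c (real CARD('d)) P Px"
    define V where "V = mesh_vertices S"
    define E where "E = mesh_edge S"
    have ws: "well_shaped_mesh rho S" and PV: "P \<subseteq> V" and rbp: "rbp_output V E beta c dd P Px"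
      using H unfolding V_def E_def beta_def dd_def by auto
    have finV: "finite V" unfolding V_def mesh_vertices_def
      using ws unfolding well_shaped_mesh_def is_simplex_def by auto
    have Esym: "\<And>u v. E u v = E v u" unfolding E_def mesh_edge_def by auto
    have deg: "\<And>v. outgoing V E P {v} \<le> M" unfolding V_def E_def M_def using degree_bound[OF ws] by blast
    have co: "real (ecount E Px (P - Px)) \<le> 2 * K * real (gsize P E) powr (1 - 1 / dd) \<and>
      \<bar>real (card Px) - real (card (P - Px))\<bar> \<le> 6 + 4 * real (gsize P E) / (log 2 (real (gsize V E))) ^ 3 \<and>
      \<bar>real (outgoing V E P Px) - real (outgoing V E P (P - Px))\<bar>
        \<le> max 64 (4 + 8 * real M) + 16 * real (outgoing V E P (P - Px)) / (log 2 (real (gsize V E))) ^ 2"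
      using core[OF finV Esym PV deg b0 b1 al K_def rbp] .
    define L where "L = log 2 (real (gsize V E))"
    have L0: "0 \<le> L"
    proof (cases "gsize V E = 0")
      case True
      then show ?thesis unfolding L_def by (simp add: log_def)
    next
      case False
      then show ?thesis unfolding L_def by simp
    qed
    have c1: "2 * K * real (gsize P E) powr (1 - 1 / dd) \<le> C * real (gsize P E) powr (1 - 1 / dd)"
      unfolding C_def by (intro mult_right_mono) auto
    have c2: "6 + 4 * real (gsize P E) / L ^ 3 \<le> C * real (gsize P E) / L ^ 3 + C"
    proof -
      have "4 * real (gsize P E) / L ^ 3 \<le> C * real (gsize P E) / L ^ 3"
        unfolding C_def using L0 K0 by (intro divide_right_mono mult_right_mono) auto
      moreover have "6 \<le> C" unfolding C_def using K0 by simp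
      ultimately show ?thesis by linarith
    qed
    have c3: "max 64 (4 + 8 * real M) + 16 * real (outgoing V E P (P - Px)) / L ^ 2
        \<le> C * real (outgoing V E P (P - Px)) / L ^ 2 + C"
    proof -
      have "16 * real (outgoing V E P (P - Px)) / L ^ 2 \<le> C * real (outgoing V E P (P - Px)) / L ^ 2"
        unfolding C_def using K0 by (intro divide_right_mono mult_right_mono) auto
      moreover have "max 64 (4 + 8 * real M) \<le> C" unfolding C_def using K0 by simp
      ultimately show ?thesis by linarith
    qed
    show "let V = mesh_vertices S; E = mesh_edge S; Py = P - Px;
            L = log 2 (real (gsize V E)) in
        real (ecount E Px Py) \<le> C * real (gsize P E) powr (1 - 1 / real CARD('d)) \<and>
        \<bar>real (card Px) - real (card Py)\<bar> \<le> C * real (gsize P E) / L ^ 3 + C \<and>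
        \<bar>real (outgoing V E P Px) - real (outgoing V E P Py)\<bar>
          \<le> C * real (outgoing V E P Py) / L ^ 2 + C"
      unfolding Let_def V_def[symmetric] E_def[symmetric] dd_def[symmetric] L_def[symmetric]
      using co c1 c2 c3 unfolding L_def[symmetric] by linarith
  qed
qed

end
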